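(* Let $A$ be a basic connected finite dimensional algebra over an algebraically closed field $k$ with ordinary quiver $Q$ without oriented cycles, and let $D\subseteq\mathsf{HH}^1(A)$. Then $D$ is diagonalizable if and only if there exists a presentation $\nu\colon kQ\twoheadrightarrow A$ such that $D\subseteq\mathsf{Im}(\theta_\nu)$.
   Context: Fix a complete set $e_1,\dots,e_n$ of primitive orthogonal idempotents of $A$ indexed by $Q_0=\{1,\dots,n\}$, $E=\bigoplus ke_i$, $\mathfrak r$ the radical. A presentation is a surjective algebra map $\nu\colon kQ\twoheadrightarrow A$ with admissible kernel ($(kQ^+)^N\subseteq\mathsf{Ker}\,\nu\subseteq(kQ^+)^2$ for some $N\ge2$, $kQ^+$ the arrow ideal) and $\nu(e_i)=e_i$. $\mathsf{HH}^1(A)=Der_0(A)/Int_0(A)$, with $Der_0(A)$ the derivations vanishing on all $e_i$ (commutator bracket) and $Int_0(A)=\{a\mapsto ea-ae\mid e\in E\}$. A basis of $A$ is a $k$-basis $\mathcal B\subseteq\bigcup_{i,j}e_jAe_i$ containing $e_1,\dots,e_n$ with its other elements in $\mathfrak r$; a subset $D\subseteq\mathsf{HH}^1(A)$ is diagonalizable if there is a basis $\mathcal B$ such that every $f\in D$ is represented by a derivation diagonal in $\mathcal B$. Walks: paths in $Q$ with formal inverse arrows allowed. For $I=\mathsf{Ker}\,\nu$, $\sim_I$ is the smallest equivalence relation on walks with $\alpha\alpha^{-1}\sim_I e_y$, $\alpha^{-1}\alpha\sim_I e_x$ for arrows $\alpha\colon x\to y$, compatible with concatenation, and identifying two paths occurring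 with nonzero coefficient in a same minimal relation of $I$ (a nonzero $\sum t_iu_i\in I$, $t_i\neq0$, distinct paths, no nonempty proper subsum in $I$). $\pi_1(Q,I)$ is the group of classes of closed walks at a fixed vertex $x_0$. Fix a maximal tree $T$ of $Q$, $\gamma_x$ the minimal walk in $T$ from $x_0$ to $x$. For a group homomorphism $f\colon\pi_1(Q,I)\to k^+$, $\theta_\nu(f)$ is the class of the derivation $\tilde f$ with $\tilde f(\nu(u))=f([\gamma_y^{-1}u\gamma_x]_I)\nu(u)$ for paths $u$ from $x$ to $y$. *)

theory Defs
  imports Complex_Main "HOL-Computational_Algebra.Polynomial"
begin

definition alg_closed :: "'k::field itself \<Rightarrow> bool" where
  "alg_closed _ \<longleftrightarrow> (\<forall>p :: 'k poly. degree p > 0 \<longrightarrow> (\<exists>z. poly p z = 0))"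

definition fd_algebra :: "('k::field \<Rightarrow> 'a::ring_1 \<Rightarrow> 'a) \<Rightarrow> bool" where
  "fd_algebra scale \<longleftrightarrow> vector_space scale \<and>
     (\<forall>c x y. scale c (x * y) = scale c x * y \<and> scale c (x * y) = x * scale c y) \<and>
     (\<exists>S. finite S \<and> module.span scale S = UNIV)"

definition right_ideal :: "'a::ring_1 set \<Rightarrow> bool" where
  "right_ideal M \<longleftrightarrow> 0 \<in> M \<and> (\<forall>x\<in>M. \<forall>y\<in>M. x + y \<in> M) \<and> (\<forall>x\<in>M. - x \<in> M)
      \<and> (\<forall>x\<in>M. \<forall>a. x * a \<in> M)"

definition maximal_right_ideal :: "'a::ring_1 set \<Rightarrow> bool" where
  "maximal_right_ideal M \<longleftrightarrow> right_ideal M \<and> M \<noteq> UNIV \<and>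
     (\<forall>N. right_ideal N \<and> M \<subseteq> N \<and> N \<noteq> UNIV \<longrightarrow> N = M)"

definition rad :: "'a::ring_1 set" where
  "rad = \<Inter> {M. maximal_right_ideal M}"

definition connected_algebra :: "'a::ring_1 itself \<Rightarrow> bool" where
  "connected_algebra _ \<longleftrightarrow> (1::'a) \<noteq> 0 \<and>
     (\<forall>c::'a. c * c = c \<and> (\<forall>a. c * a = a * c) \<longrightarrow> c = 0 \<or> c = 1)"

definition primitive_idempotent :: "'a::ring_1 \<Rightarrow> bool" where
  "primitive_idempotent x \<longleftrightarrow> x * x = x \<and> x \<noteq> 0 \<and>
     (\<forall>f g. f * f = f \<and> g * g = g \<and> f * g = 0 \<and> g * f = 0 \<and> f + g = x \<longrightarrow> f = 0 \<or> g = 0)"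

definition complete_prim_orth_idems :: "nat \<Rightarrow> (nat \<Rightarrow> 'a::ring_1) \<Rightarrow> bool" where
  "complete_prim_orth_idems n e \<longleftrightarrow>
     (\<forall>i\<in>{1..n}. primitive_idempotent (e i)) \<and>
     (\<forall>i\<in>{1..n}. \<forall>j\<in>{1..n}. i \<noteq> j \<longrightarrow> e i * e j = 0) \<and>
     sum e {1..n} = 1"

text \<open>Isomorphism of right A-modules (k-linearity is automatic since scalars act through A).\<close>
definition right_module_iso :: "'a::ring_1 set \<Rightarrow> 'a set \<Rightarrow> bool" where
  "right_module_iso P P' \<longleftrightarrow> (\<exists>h. bij_betw h P P' \<and>
     (\<forall>x\<in>P. \<forall>y\<in>P. h (x + y) = h x + h y) \<and> (\<forall>x\<in>P. \<forall>a. h (x * a) = h x * a))"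

definition basic_algebra :: "nat \<Rightarrow> (nat \<Rightarrow> 'a::ring_1) \<Rightarrow> bool" where
  "basic_algebra n e \<longleftrightarrow> (\<forall>i\<in>{1..n}. \<forall>j\<in>{1..n}. i \<noteq> j \<longrightarrow>
      \<not> right_module_iso {e i * a | a. True} {e j * a | a. True})"

definition corner :: "(nat \<Rightarrow> 'a::ring_1) \<Rightarrow> nat \<Rightarrow> nat \<Rightarrow> 'a set \<Rightarrow> 'a set" where
  "corner e j i S = {e j * x * e i | x. x \<in> S}"

definition rad_sq :: "('k::field \<Rightarrow> 'a::ring_1 \<Rightarrow> 'a) \<Rightarrow> 'a set" where
  "rad_sq scale = module.span scale {x * y | x y. x \<in> rad \<and> y \<in> rad}"

text \<open>A quiver has vertices Q0 = {1..n}, arrows Q1 with source s and target t.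
  A path is given by its start vertex and its list of arrows in order of traversal.\<close>
fun path_from :: "'q set \<Rightarrow> ('q \<Rightarrow> nat) \<Rightarrow> ('q \<Rightarrow> nat) \<Rightarrow> nat \<Rightarrow> 'q list \<Rightarrow> nat \<Rightarrow> bool" where
  "path_from Q1 s t x [] y \<longleftrightarrow> x = y"
| "path_from Q1 s t x (\<alpha> # ps) y \<longleftrightarrow> \<alpha> \<in> Q1 \<and> s \<alpha> = x \<and> path_from Q1 s t (t \<alpha>) ps y"

definition ordinary_quiver ::
  "('k::field \<Rightarrow> 'a::ring_1 \<Rightarrow> 'a) \<Rightarrow> nat \<Rightarrow> (nat \<Rightarrow> 'a) \<Rightarrow> 'q set \<Rightarrow> ('q \<Rightarrow> nat) \<Rightarrow> ('q \<Rightarrow> nat) \<Rightarrow> bool" where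
  "ordinary_quiver scale n e Q1 s t \<longleftrightarrow> finite Q1 \<and>
     (\<forall>\<alpha>\<in>Q1. s \<alpha> \<in> {1..n} \<and> t \<alpha> \<in> {1..n}) \<and>
     (\<forall>i\<in>{1..n}. \<forall>j\<in>{1..n}. card {\<alpha>\<in>Q1. s \<alpha> = i \<and> t \<alpha> = j} =
        vector_space.dim scale (corner e j i rad) - vector_space.dim scale (corner e j i (rad_sq scale)))"

definition no_oriented_cycles :: "nat \<Rightarrow> 'q set \<Rightarrow> ('q \<Rightarrow> nat) \<Rightarrow> ('q \<Rightarrow> nat) \<Rightarrow> bool" where
  "no_oriented_cycles n Q1 s t \<longleftrightarrow> (\<forall>x\<in>{1..n}. \<forall>ps. path_from Q1 s t x ps x \<longrightarrow> ps = [])"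

text \<open>Walks: lists of steps (arrow, True) = arrow, (arrow, False) = formal inverse,
  in order of traversal.\<close>
fun walk_from :: "'q set \<Rightarrow> ('q \<Rightarrow> nat) \<Rightarrow> ('q \<Rightarrow> nat) \<Rightarrow> nat \<Rightarrow> ('q \<times> bool) list \<Rightarrow> nat \<Rightarrow> bool" where
  "walk_from Q1 s t x [] y \<longleftrightarrow> x = y"
| "walk_from Q1 s t x ((\<alpha>, b) # w) y \<longleftrightarrow> \<alpha> \<in> Q1 \<and>
     (if b then s \<alpha> = x \<and> walk_from Q1 s t (t \<alpha>) w y
           else t \<alpha> = x \<and> walk_from Q1 s t (s \<alpha>) w y)"

definition path_walk :: "'q list \<Rightarrow> ('q \<times> bool) list" where
  "path_walk ps = map (\<lambda>\<alpha>. (\<alpha>, True)) ps"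

definition walk_inv :: "('q \<times> bool) list \<Rightarrow> ('q \<times> bool) list" where
  "walk_inv w = rev (map (\<lambda>(\<alpha>, b). (\<alpha>, \<not> b)) w)"

definition reduced_walk :: "('q \<times> bool) list \<Rightarrow> bool" where
  "reduced_walk w \<longleftrightarrow> (\<forall>i. Suc i < length w \<longrightarrow>
      \<not> (fst (w ! i) = fst (w ! Suc i) \<and> snd (w ! i) \<noteq> snd (w ! Suc i)))"

definition maximal_tree :: "nat \<Rightarrow> 'q set \<Rightarrow> ('q \<Rightarrow> nat) \<Rightarrow> ('q \<Rightarrow> nat) \<Rightarrow> 'q set \<Rightarrow> bool" where
  "maximal_tree n Q1 s t T \<longleftrightarrow> T \<subseteq> Q1 \<and>
     (\<forall>x\<in>{1..n}. \<forall>y\<in>{1..n}. \<exists>w. walk_from T s t x w y) \<and>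
     (\<forall>x\<in>{1..n}. \<forall>w. walk_from T s t x w x \<and> reduced_walk w \<longrightarrow> w = [])"

text \<open>Image in A of a path under the algebra map determined by \<phi> on arrows
  (with e_x \<mapsto> e_x): the path \<alpha>_1 ... \<alpha>_m (traversal order) maps to \<phi> \<alpha>_m \<cdots> \<phi> \<alpha>_1.\<close>
definition path_val :: "(nat \<Rightarrow> 'a::ring_1) \<Rightarrow> ('q \<Rightarrow> 'a) \<Rightarrow> nat \<Rightarrow> 'q list \<Rightarrow> 'a" where
  "path_val e \<phi> x ps = (if ps = [] then e x else foldl (\<lambda>acc \<alpha>. \<phi> \<alpha> * acc) 1 ps)"

definition is_path :: "nat \<Rightarrow> 'q set \<Rightarrow> ('q \<Rightarrow> nat) \<Rightarrow> ('q \<Rightarrow> nat) \<Rightarrow> nat \<times> 'q list \<Rightarrow> bool" where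
  "is_path n Q1 s t p \<longleftrightarrow> fst p \<in> {1..n} \<and> (\<exists>y. path_from Q1 s t (fst p) (snd p) y)"

text \<open>Elements of kQ: finitely supported k-linear combinations of paths.\<close>
definition pa_elem :: "nat \<Rightarrow> 'q set \<Rightarrow> ('q \<Rightarrow> nat) \<Rightarrow> ('q \<Rightarrow> nat) \<Rightarrow> (nat \<times> 'q list \<Rightarrow> 'k::field) \<Rightarrow> bool" where
  "pa_elem n Q1 s t \<rho> \<longleftrightarrow> finite {p. \<rho> p \<noteq> 0} \<and> (\<forall>p. \<rho> p \<noteq> 0 \<longrightarrow> is_path n Q1 s t p)"

definition arrow_ideal_pow :: "nat \<Rightarrow> 'q set \<Rightarrow> ('q \<Rightarrow> nat) \<Rightarrow> ('q \<Rightarrow> nat) \<Rightarrow> nat \<Rightarrow> (nat \<times> 'q list \<Rightarrow> 'k::field) set" where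
  "arrow_ideal_pow n Q1 s t m = {\<rho>. pa_elem n Q1 s t \<rho> \<and> (\<forall>p. \<rho> p \<noteq> 0 \<longrightarrow> length (snd p) \<ge> m)}"

definition pa_map :: "('k::field \<Rightarrow> 'a::ring_1 \<Rightarrow> 'a) \<Rightarrow> (nat \<Rightarrow> 'a) \<Rightarrow> ('q \<Rightarrow> 'a) \<Rightarrow> (nat \<times> 'q list \<Rightarrow> 'k) \<Rightarrow> 'a" where
  "pa_map scale e \<phi> \<rho> = (\<Sum>p\<in>{p. \<rho> p \<noteq> 0}. scale (\<rho> p) (path_val e \<phi> (fst p) (snd p)))"

definition pa_kernel :: "nat \<Rightarrow> 'q set \<Rightarrow> ('q \<Rightarrow> nat) \<Rightarrow> ('q \<Rightarrow> nat) \<Rightarrow> ('k::field \<Rightarrow> 'a::ring_1 \<Rightarrow> 'a) \<Rightarrow> (nat \<Rightarrow> 'a) \<Rightarrow> ('q \<Rightarrow> 'a) \<Rightarrow> (nat \<times> 'q list \<Rightarrow> 'k) set" where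
  "pa_kernel n Q1 s t scale e \<phi> = {\<rho>. pa_elem n Q1 s t \<rho> \<and> pa_map scale e \<phi> \<rho> = 0}"

text \<open>A presentation \<nu> : kQ \<rightarrow> A with \<nu>(e_i) = e_i is determined by its values \<phi> on arrows;
  \<nu> is an algebra map iff \<phi> \<alpha> \<in> e_{t \<alpha>} A e_{s \<alpha>}.\<close>
definition presentation :: "nat \<Rightarrow> 'q set \<Rightarrow> ('q \<Rightarrow> nat) \<Rightarrow> ('q \<Rightarrow> nat) \<Rightarrow> ('k::field \<Rightarrow> 'a::ring_1 \<Rightarrow> 'a) \<Rightarrow> (nat \<Rightarrow> 'a) \<Rightarrow> ('q \<Rightarrow> 'a) \<Rightarrow> bool" where
  "presentation n Q1 s t scale e \<phi> \<longleftrightarrow>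
     (\<forall>\<alpha>\<in>Q1. \<phi> \<alpha> = e (t \<alpha>) * \<phi> \<alpha> * e (s \<alpha>)) \<and>
     (\<forall>a. \<exists>\<rho>. pa_elem n Q1 s t \<rho> \<and> pa_map scale e \<phi> \<rho> = a) \<and>
     (\<exists>N\<ge>2. arrow_ideal_pow n Q1 s t N \<subseteq> pa_kernel n Q1 s t scale e \<phi> \<and>
            pa_kernel n Q1 s t scale e \<phi> \<subseteq> arrow_ideal_pow n Q1 s t 2)"

definition minimal_relation :: "nat \<Rightarrow> 'q set \<Rightarrow> ('q \<Rightarrow> nat) \<Rightarrow> ('q \<Rightarrow> nat) \<Rightarrow> ('k::field \<Rightarrow> 'a::ring_1 \<Rightarrow> 'a) \<Rightarrow> (nat \<Rightarrow> 'a) \<Rightarrow> ('q \<Rightarrow> 'a) \<Rightarrow> (nat \<times> 'q list \<Rightarrow> 'k) \<Rightarrow> bool" where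
  "minimal_relation n Q1 s t scale e \<phi> \<rho> \<longleftrightarrow>
     \<rho> \<in> pa_kernel n Q1 s t scale e \<phi> \<and> {p. \<rho> p \<noteq> 0} \<noteq> {} \<and>
     (\<forall>S. S \<subseteq> {p. \<rho> p \<noteq> 0} \<and> S \<noteq> {} \<and> S \<noteq> {p. \<rho> p \<noteq> 0} \<longrightarrow>
        (\<lambda>p. if p \<in> S then \<rho> p else 0) \<notin> pa_kernel n Q1 s t scale e \<phi>)"

inductive walk_rel :: "nat \<Rightarrow> 'q set \<Rightarrow> ('q \<Rightarrow> nat) \<Rightarrow> ('q \<Rightarrow> nat) \<Rightarrow> ('k::field \<Rightarrow> 'a::ring_1 \<Rightarrow> 'a) \<Rightarrow> (nat \<Rightarrow> 'a) \<Rightarrow> ('q \<Rightarrow> 'a)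
    \<Rightarrow> nat \<times> ('q \<times> bool) list \<Rightarrow> nat \<times> ('q \<times> bool) list \<Rightarrow> bool"
  for n Q1 s t scale e \<phi> where
  refl: "x \<in> {1..n} \<Longrightarrow> walk_from Q1 s t x w y \<Longrightarrow> walk_rel n Q1 s t scale e \<phi> (x, w) (x, w)"
| sym: "walk_rel n Q1 s t scale e \<phi> a b \<Longrightarrow> walk_rel n Q1 s t scale e \<phi> b a"
| trans: "walk_rel n Q1 s t scale e \<phi> a b \<Longrightarrow> walk_rel n Q1 s t scale e \<phi> b c \<Longrightarrow> walk_rel n Q1 s t scale e \<phi> a c"
| cancel_right: "\<alpha> \<in> Q1 \<Longrightarrow> walk_rel n Q1 s t scale e \<phi> (t \<alpha>, [(\<alpha>, False), (\<alpha>, True)]) (t \<alpha>, [])"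
| cancel_left: "\<alpha> \<in> Q1 \<Longrightarrow> walk_rel n Q1 s t scale e \<phi> (s \<alpha>, [(\<alpha>, True), (\<alpha>, False)]) (s \<alpha>, [])"
| minrel: "minimal_relation n Q1 s t scale e \<phi> \<rho> \<Longrightarrow> \<rho> (x, ps) \<noteq> 0 \<Longrightarrow> \<rho> (x', qs) \<noteq> 0 \<Longrightarrow>
      walk_rel n Q1 s t scale e \<phi> (x, path_walk ps) (x', path_walk qs)"
| concat: "walk_rel n Q1 s t scale e \<phi> (x, w1) (x, w2) \<Longrightarrow> walk_from Q1 s t x w1 y \<Longrightarrow> walk_from Q1 s t x w2 y \<Longrightarrow>
      walk_from Q1 s t x' u x \<Longrightarrow> walk_from Q1 s t y v y' \<Longrightarrow>
      walk_rel n Q1 s t scale e \<phi> (x', u @ w1 @ v) (x', u @ w2 @ v)"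

text \<open>A group homomorphism \<pi>_1(Q,I) \<rightarrow> k^+, represented as a function on closed walks at x0
  which is constant on \<sim>_I-classes and additive with respect to concatenation.\<close>
definition pi1_hom :: "nat \<Rightarrow> 'q set \<Rightarrow> ('q \<Rightarrow> nat) \<Rightarrow> ('q \<Rightarrow> nat) \<Rightarrow> ('k::field \<Rightarrow> 'a::ring_1 \<Rightarrow> 'a) \<Rightarrow> (nat \<Rightarrow> 'a) \<Rightarrow> ('q \<Rightarrow> 'a)
    \<Rightarrow> nat \<Rightarrow> (('q \<times> bool) list \<Rightarrow> 'k) \<Rightarrow> bool" where
  "pi1_hom n Q1 s t scale e \<phi> x0 f \<longleftrightarrow>
     (\<forall>w1 w2. walk_from Q1 s t x0 w1 x0 \<and> walk_from Q1 s t x0 w2 x0 \<and>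
        walk_rel n Q1 s t scale e \<phi> (x0, w1) (x0, w2) \<longrightarrow> f w1 = f w2) \<and>
     (\<forall>w1 w2. walk_from Q1 s t x0 w1 x0 \<and> walk_from Q1 s t x0 w2 x0 \<longrightarrow> f (w1 @ w2) = f w1 + f w2)"

definition Der0 :: "('k::field \<Rightarrow> 'a::ring_1 \<Rightarrow> 'a) \<Rightarrow> nat \<Rightarrow> (nat \<Rightarrow> 'a) \<Rightarrow> ('a \<Rightarrow> 'a) set" where
  "Der0 scale n e = {d. (\<forall>a b. d (a + b) = d a + d b) \<and> (\<forall>c a. d (scale c a) = scale c (d a)) \<and>
       (\<forall>a b. d (a * b) = d a * b + a * d b) \<and> (\<forall>i\<in>{1..n}. d (e i) = 0)}"

definition Int0 :: "('k::field \<Rightarrow> 'a::ring_1 \<Rightarrow> 'a) \<Rightarrow> nat \<Rightarrow> (nat \<Rightarrow> 'a) \<Rightarrow> ('a \<Rightarrow> 'a) set" where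
  "Int0 scale n e = {(\<lambda>a. x * a - a * x) | x. x \<in> module.span scale (e ` {1..n})}"

definition hh_class :: "('k::field \<Rightarrow> 'a::ring_1 \<Rightarrow> 'a) \<Rightarrow> nat \<Rightarrow> (nat \<Rightarrow> 'a) \<Rightarrow> ('a \<Rightarrow> 'a) \<Rightarrow> ('a \<Rightarrow> 'a) set" where
  "hh_class scale n e d = {d' \<in> Der0 scale n e. (\<lambda>a. d' a - d a) \<in> Int0 scale n e}"

text \<open>HH^1(A) = Der_0(A)/Int_0(A), elements are cosets.\<close>
definition HH1 :: "('k::field \<Rightarrow> 'a::ring_1 \<Rightarrow> 'a) \<Rightarrow> nat \<Rightarrow> (nat \<Rightarrow> 'a) \<Rightarrow> ('a \<Rightarrow> 'a) set set" where
  "HH1 scale n e = hh_class scale n e ` Der0 scale n e"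

definition algebra_basis :: "('k::field \<Rightarrow> 'a::ring_1 \<Rightarrow> 'a) \<Rightarrow> nat \<Rightarrow> (nat \<Rightarrow> 'a) \<Rightarrow> 'a set \<Rightarrow> bool" where
  "algebra_basis scale n e B \<longleftrightarrow> \<not> module.dependent scale B \<and> module.span scale B = UNIV \<and>
     (\<forall>b\<in>B. \<exists>i\<in>{1..n}. \<exists>j\<in>{1..n}. b \<in> corner e j i UNIV) \<and>
     e ` {1..n} \<subseteq> B \<and> B - e ` {1..n} \<subseteq> rad"

definition diagonalizable :: "('k::field \<Rightarrow> 'a::ring_1 \<Rightarrow> 'a) \<Rightarrow> nat \<Rightarrow> (nat \<Rightarrow> 'a) \<Rightarrow> ('a \<Rightarrow> 'a) set set \<Rightarrow> bool" where
  "diagonalizable scale n e D \<longleftrightarrow> (\<exists>B. algebra_basis scale n e B \<and>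
     (\<forall>c\<in>D. \<exists>d\<in>c. \<forall>b\<in>B. \<exists>c. d b = scale c b))"

text \<open>Image of \<theta>_\<nu> : Hom(\<pi>_1(Q,I), k^+) \<rightarrow> HH^1(A), relative to base point x0 and
  walks \<gamma> x (minimal walks in the maximal tree from x0 to x).\<close>
definition theta_image :: "nat \<Rightarrow> 'q set \<Rightarrow> ('q \<Rightarrow> nat) \<Rightarrow> ('q \<Rightarrow> nat) \<Rightarrow> ('k::field \<Rightarrow> 'a::ring_1 \<Rightarrow> 'a) \<Rightarrow> (nat \<Rightarrow> 'a) \<Rightarrow> ('q \<Rightarrow> 'a)
    \<Rightarrow> nat \<Rightarrow> (nat \<Rightarrow> ('q \<times> bool) list) \<Rightarrow> ('a \<Rightarrow> 'a) set set" where
  "theta_image n Q1 s t scale e \<phi> x0 \<gamma> =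
     {c. \<exists>f. pi1_hom n Q1 s t scale e \<phi> x0 f \<and> (\<exists>d\<in>Der0 scale n e. c = hh_class scale n e d \<and>
        (\<forall>x y ps. x \<in> {1..n} \<and> path_from Q1 s t x ps y \<longrightarrow>
           d (path_val e \<phi> x ps) = scale (f (\<gamma> x @ path_walk ps @ walk_inv (\<gamma> y))) (path_val e \<phi> x ps)))}"

end

theory Submission
  imports Defs
begin


lemma geom_ring1: "(1 - (x::'a::ring_1)) * (\<Sum>i<n. x^i) = 1 - x^n"
proof (induction n)
  case (Suc n)
  have "(1-x) * (\<Sum>i<Suc n. x^i) = (1-x)*(\<Sum>i<n. x^i) + (1-x)*x^n" by (simp add: distrib_left)
  also have "\<dots> = 1 - x^n + (x^n - x * x^n)" using Suc by (simp add: left_diff_distrib)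
  also have "\<dots> = 1 - x^Suc n" by simp
  finally show ?case .
qed simp

locale falg =
  fixes scale :: "'k::field \<Rightarrow> 'a::ring_1 \<Rightarrow> 'a"
  assumes vs: "vector_space scale"
  and sc_l: "\<And>c x y. scale c (x*y) = scale c x * y"
  and sc_r: "\<And>c x y. scale c (x*y) = x * scale c y"
begin

sublocale vector_space scale by (rule vs)

abbreviation R :: "'a set" where "R \<equiv> rad"

lemma sc1l: "scale c x = scale c 1 * x" using sc_l[of c 1 x] by simp
lemma sc1r: "scale c x = x * scale c 1" using sc_r[of c x 1] by simp

lemma right_ideal_Inter: "(\<And>M. M \<in> S \<Longrightarrow> right_ideal M) \<Longrightarrow> right_ideal (\<Inter>S)"
  unfolding right_ideal_def by blast

lemma maximal_right_ideal_imp: "maximal_right_ideal M \<Longrightarrow> right_ideal M"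
  unfolding maximal_right_ideal_def by blast

lemma rad_right_ideal: "right_ideal R"
  unfolding rad_def by (rule right_ideal_Inter) (auto simp: maximal_right_ideal_def)

lemma right_ideal_UNIV: "right_ideal M \<Longrightarrow> 1 \<in> M \<Longrightarrow> M = UNIV"
  unfolding right_ideal_def by (metis UNIV_eq_I mult_1)

lemma rad_add: "x \<in> R \<Longrightarrow> y \<in> R \<Longrightarrow> x + y \<in> R"
  using rad_right_ideal unfolding right_ideal_def by blast
lemma rad_mult: "x \<in> R \<Longrightarrow> x * y \<in> R"
  using rad_right_ideal unfolding right_ideal_def by blast
lemma rad_zero: "0 \<in> R"
  using rad_right_ideal unfolding right_ideal_def by blast
lemma rad_neg: "x \<in> R \<Longrightarrow> - x \<in> R"
  using rad_right_ideal unfolding right_ideal_def by blast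
lemma rad_scale: "x \<in> R \<Longrightarrow> scale c x \<in> R"
  by (metis sc1r rad_mult)
lemma rad_diff: "x \<in> R \<Longrightarrow> y \<in> R \<Longrightarrow> x - y \<in> R"
  by (metis rad_add rad_neg diff_conv_add_uminus)
lemma subspace_rad: "subspace R"
  unfolding subspace_def using rad_zero rad_add rad_scale by blast
lemma rad_sum: "(\<And>i. i \<in> I \<Longrightarrow> f i \<in> R) \<Longrightarrow> sum f I \<in> R"
  by (rule subspace_sum[OF subspace_rad])
lemma span_rad: "span R = R"
  using subspace_rad by simp

lemma max_right_ideal_exists:
  assumes I: "right_ideal I" and one: "1 \<notin> I"
  shows "\<exists>M. maximal_right_ideal M \<and> I \<subseteq> M"
proof -
  let ?A = "{N. right_ideal N \<and> I \<subseteq> N \<and> 1 \<notin> N}"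
  have "\<exists>M\<in>?A. \<forall>X\<in>?A. M \<subseteq> X \<longrightarrow> X = M"
  proof (rule subset_Zorn_nonempty)
    show "?A \<noteq> {}" using I one by blast
  next
    fix C assume C: "C \<noteq> {}" "subset.chain ?A C"
    have sub: "\<And>c. c \<in> C \<Longrightarrow> right_ideal c \<and> I \<subseteq> c \<and> 1 \<notin> c"
      using C unfolding subset.chain_def by blast
    have cmp: "\<And>c d. c \<in> C \<Longrightarrow> d \<in> C \<Longrightarrow> c \<subseteq> d \<or> d \<subseteq> c"
      using C unfolding subset.chain_def by blast
    have "right_ideal (\<Union>C)"
      unfolding right_ideal_def
    proof (intro conjI ballI allI)
      show "0 \<in> \<Union>C" using C(1) sub unfolding right_ideal_def by blast
    next
      fix x y assume "x \<in> \<Union>C" "y \<in> \<Union>C"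
      then obtain c d where cd: "c \<in> C" "d \<in> C" "x \<in> c" "y \<in> d" by blast
      show "x + y \<in> \<Union>C"
        using cmp[OF cd(1,2)] sub[OF cd(1)] sub[OF cd(2)] cd unfolding right_ideal_def by blast
    next
      fix x assume "x \<in> \<Union>C"
      then show "- x \<in> \<Union>C" using sub unfolding right_ideal_def by blast
    next
      fix x a assume "x \<in> \<Union>C"
      then show "x * a \<in> \<Union>C" using sub unfolding right_ideal_def by blast
    qed
    moreover have "I \<subseteq> \<Union>C" using C(1) sub by blast
    moreover have "1 \<notin> \<Union>C" using sub by blast
    ultimately show "\<Union>C \<in> ?A" by blast
  qed
  then obtain M where M: "M \<in> ?A" and Mm: "\<forall>X\<in>?A. M \<subseteq> X \<longrightarrow> X = M" ..
  have M1: "right_ideal M" "I \<subseteq> M" "1 \<notin> M" using M by auto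
  have "maximal_right_ideal M"
    unfolding maximal_right_ideal_def
  proof (intro conjI allI impI)
    show "right_ideal M" using M1 by simp
    show "M \<noteq> UNIV" using M1 by auto
  next
    fix N assume N: "right_ideal N \<and> M \<subseteq> N \<and> N \<noteq> UNIV"
    then have "1 \<notin> N" using right_ideal_UNIV by blast
    then have "N \<in> ?A" using N M1 by auto
    then show "N = M" using Mm N by auto
  qed
  then show ?thesis using M1 by blast
qed

lemma rad_right_inv:
  assumes x: "x \<in> R" shows "\<exists>u. (1 - x) * u = 1"
proof (rule ccontr)
  assume nu: "\<not> ?thesis"
  let ?I = "{(1 - x) * a | a. True}"
  have "right_ideal ?I"
    unfolding right_ideal_def
  proof (intro conjI ballI allI)
    have "(0::'a) = (1 - x) * 0" by simp
    then show "0 \<in> ?I" by blast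
  next
    fix u v assume "u \<in> ?I" "v \<in> ?I"
    then obtain a b where "u = (1 - x) * a" "v = (1 - x) * b" by blast
    then have "u + v = (1 - x) * (a + b)" by (simp add: distrib_left)
    then show "u + v \<in> ?I" by blast
  next
    fix u assume "u \<in> ?I"
    then obtain a where "u = (1 - x) * a" by blast
    then have "- u = (1 - x) * (- a)" by simp
    then show "- u \<in> ?I" by blast
  next
    fix u c assume "u \<in> ?I"
    then obtain a where "u = (1 - x) * a" by blast
    then have "u * c = (1 - x) * (a * c)" by (simp add: mult.assoc)
    then show "u * c \<in> ?I" by blast
  qed
  moreover have "1 \<notin> ?I" using nu by auto
  ultimately obtain M where M: "maximal_right_ideal M" "?I \<subseteq> M"
    using max_right_ideal_exists by blast
  have "x \<in> M" using x M(1) unfolding rad_def by blast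
  moreover have "1 - x \<in> M" using M(2) by (metis (mono_tags, lifting) mem_Collect_eq mult_1_right subsetD)
  ultimately have "1 \<in> M" using maximal_right_ideal_imp[OF M(1)] unfolding right_ideal_def
    by (metis diff_add_cancel)
  then show False using M(1) right_ideal_UNIV maximal_right_ideal_def by blast
qed

lemma rad_left_inv:
  assumes x: "x \<in> R" shows "\<exists>v. v * (1 - x) = 1"
proof -
  obtain u where u: "(1 - x) * u = 1" using rad_right_inv[OF x] by blast
  then have "u = 1 - (- (x * u))" by (simp add: algebra_simps)
  moreover have "- (x * u) \<in> R" using x rad_mult rad_neg by blast
  ultimately obtain v where v: "u * v = 1" using rad_right_inv by metis
  have "(1 - x) = (1 - x) * (u * v)" using v by simp
  also have "\<dots> = v" using u by (simp add: mult.assoc[symmetric])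
  finally show ?thesis using v by metis
qed

lemma rad_char:
  assumes h: "\<And>a. \<exists>u. (1 - x * a) * u = 1" shows "x \<in> R"
  unfolding rad_def
proof
  fix M :: "'a set" assume "M \<in> {M. maximal_right_ideal M}"
  then have M: "maximal_right_ideal M" by simp
  have RM: "right_ideal M" using M maximal_right_ideal_imp by blast
  show "x \<in> M"
  proof (rule ccontr)
    assume xM: "x \<notin> M"
    let ?N = "{m + x * a | m a. m \<in> M}"
    have RN: "right_ideal ?N"
      unfolding right_ideal_def
    proof (intro conjI ballI allI)
      have "(0::'a) = 0 + x * 0" by simp
      then show "0 \<in> ?N" using RM unfolding right_ideal_def by blast
    next
      fix u v assume "u \<in> ?N" "v \<in> ?N"
      then obtain m1 a1 m2 a2 where h: "u = m1 + x * a1" "v = m2 + x * a2" "m1 \<in> M" "m2 \<in> M" by blast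
      then have "u + v = (m1 + m2) + x * (a1 + a2)" by (simp add: distrib_left add_ac)
      moreover have "m1 + m2 \<in> M" using h RM unfolding right_ideal_def by blast
      ultimately show "u + v \<in> ?N" by blast
    next
      fix u assume "u \<in> ?N"
      then obtain m1 a1 where h: "u = m1 + x * a1" "m1 \<in> M" by blast
      then have "- u = (- m1) + x * (- a1)" by simp
      moreover have "- m1 \<in> M" using h RM unfolding right_ideal_def by blast
      ultimately show "- u \<in> ?N" by blast
    next
      fix u b assume "u \<in> ?N"
      then obtain m1 a1 where h: "u = m1 + x * a1" "m1 \<in> M" by blast
      then have "u * b = m1 * b + x * (a1 * b)" by (simp add: distrib_right mult.assoc)
      moreover have "m1 * b \<in> M" using h RM unfolding right_ideal_def by blast
      ultimately show "u * b \<in> ?N" by blast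
    qed
    have "M \<subseteq> ?N"
    proof
      fix m assume "m \<in> M" then have "m = m + x * 0" "m \<in> M" by simp_all
      then show "m \<in> ?N" by blast
    qed
    moreover have "x \<in> ?N"
    proof -
      have "x = 0 + x * 1" "0 \<in> M" using RM unfolding right_ideal_def by simp_all
      then show ?thesis by blast
    qed
    ultimately have MN: "M \<subseteq> ?N" "x \<in> ?N" by blast+
    have "?N = UNIV"
    proof (rule ccontr)
      assume "?N \<noteq> UNIV"
      with M RN MN(1) have "?N = M" unfolding maximal_right_ideal_def by blast
      with MN(2) xM show False by (metis (no_types, lifting))
    qed
    then have "1 \<in> ?N" by simp
    then obtain m a where ma: "1 = m + x * a" "m \<in> M" by blast
    then have "m = 1 - x * a" by (simp add: algebra_simps)
    with h obtain u where "m * u = 1" by blast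
    then have "1 \<in> M" using ma(2) RM unfolding right_ideal_def by (metis (no_types, lifting))
    then show False using M right_ideal_UNIV RM unfolding maximal_right_ideal_def by blast
  qed
qed

lemma rad_left_mult:
  assumes x: "x \<in> R" shows "b * x \<in> R"
proof (rule rad_char)
  fix a
  have "x * (a * b) \<in> R" using x rad_mult by blast
  then obtain u where u: "(1 - x * (a * b)) * u = 1" using rad_right_inv by blast
  have "(1 - b * x * a) * (1 + b * u * (x * a)) = 1 - b * x * a + b * u * (x * a) - b * x * a * b * u * (x * a)"
    by (simp add: left_diff_distrib right_diff_distrib distrib_left mult.assoc)
  also have "\<dots> = 1 - b * x * a + b * ((1 - x * (a * b)) * u) * (x * a)"
    by (simp add: left_diff_distrib right_diff_distrib distrib_left mult.assoc)
  also have "\<dots> = 1" using u by (simp add: mult.assoc)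
  finally show "\<exists>u. (1 - b * x * a) * u = 1" by blast
qed

lemma idem_not_rad:
  assumes "f * f = f" "f \<noteq> 0" shows "f \<notin> R"
proof
  assume "f \<in> R"
  then obtain u where "(1 - f) * u = 1" using rad_right_inv by blast
  then have "f * ((1 - f) * u) = f" by simp
  then have "f = 0" using assms(1) by (simp add: algebra_simps mult.assoc[symmetric])
  then show False using assms by simp
qed

lemma nil_rad:
  assumes h: "\<And>a. \<exists>N. (x * a) ^ N = 0" shows "x \<in> R"
proof (rule rad_char)
  fix a obtain N where "(x * a) ^ N = 0" using h by blast
  then have "(1 - x * a) * (\<Sum>i<N. (x*a)^i) = 1" using geom_ring1[of "x*a" N] by simp
  then show "\<exists>u. (1 - x * a) * u = 1" by blast
qed

end


context falg begin

lemma span_mult: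
  assumes x: "x \<in> span X" and y: "y \<in> span Y"
  shows "x * y \<in> span {a * b | a b. a \<in> X \<and> b \<in> Y}"
proof -
  let ?P = "span {a * b | a b. a \<in> X \<and> b \<in> Y}"
  have base: "a * y \<in> ?P" if a: "a \<in> X" for a
  proof -
    have "subspace {y. a * y \<in> ?P}"
      unfolding subspace_def
      by (auto simp: distrib_left span_zero span_add sc_r[symmetric] span_scale)
    moreover have "\<And>b. b \<in> Y \<Longrightarrow> a * b \<in> ?P" using a by (auto intro!: span_base)
    ultimately show ?thesis using span_induct[OF y, of "\<lambda>y. a * y \<in> ?P"] by blast
  qed
  have "subspace {x. x * y \<in> ?P}"
    unfolding subspace_def
    by (auto simp: distrib_right span_zero span_add sc_l[symmetric] span_scale)
  then show ?thesis using span_induct[OF x, of "\<lambda>x. x * y \<in> ?P"] base by blast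
qed

definition lcomb :: "'a set \<Rightarrow> 'a set \<Rightarrow> 'a set" where
  "lcomb G Z = {\<Sum>g\<in>G. r g * g | r. \<forall>g. r g \<in> Z}"

lemma lcombI: "(\<And>g. r g \<in> Z) \<Longrightarrow> x = (\<Sum>g\<in>G. r g * g) \<Longrightarrow> x \<in> lcomb G Z"
  unfolding lcomb_def by blast

lemma subspace_lcomb:
  assumes Z: "subspace Z" shows "subspace (lcomb G Z)"
  unfolding subspace_def
proof (intro conjI ballI allI)
  show "0 \<in> lcomb G Z" by (rule lcombI[of "\<lambda>_. 0"]) (use subspace_0[OF Z] in auto)
next
  fix x y assume "x \<in> lcomb G Z" "y \<in> lcomb G Z"
  then obtain r1 r2 where h: "x = (\<Sum>g\<in>G. r1 g * g)" "y = (\<Sum>g\<in>G. r2 g * g)"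
    "\<forall>g. r1 g \<in> Z" "\<forall>g. r2 g \<in> Z" unfolding lcomb_def by blast
  show "x + y \<in> lcomb G Z" by (rule lcombI[of "\<lambda>g. r1 g + r2 g"])
     (use h subspace_add[OF Z] in \<open>auto simp: sum.distrib distrib_right\<close>)
next
  fix c x assume "x \<in> lcomb G Z"
  then obtain r1 where h: "x = (\<Sum>g\<in>G. r1 g * g)" "\<forall>g. r1 g \<in> Z" unfolding lcomb_def by blast
  show "scale c x \<in> lcomb G Z" by (rule lcombI[of "\<lambda>g. scale c (r1 g)"])
     (use h subspace_scale[OF Z] in \<open>auto simp: scale_sum_right sc_l\<close>)
qed

lemma lcomb_base:
  assumes "g0 \<in> G" "finite G" "subspace Z" "1 \<in> Z" shows "g0 \<in> lcomb G Z"
proof -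
  have "(\<Sum>g\<in>G. (if g = g0 then 1 else 0) * g) = (\<Sum>g\<in>G. if g = g0 then g else 0)"
    by (rule sum.cong) auto
  also have "\<dots> = g0" using assms by (simp add: sum.delta)
  finally show ?thesis by (intro lcombI[of "\<lambda>g. if g = g0 then 1 else 0"]) (use assms subspace_0 in auto)
qed

primrec radpow :: "nat \<Rightarrow> 'a set" where
  "radpow 0 = UNIV"
| "radpow (Suc k) = span {x * y | x y. x \<in> R \<and> y \<in> radpow k}"

lemma subspace_radpow: "subspace (radpow k)"
  by (cases k) auto

lemma radpow_1: "radpow 1 = R"
proof -
  have "span {x * y | x y. x \<in> R \<and> y \<in> (UNIV::'a set)} = R"
  proof (rule span_subspace)
    show "{x * y | x y. x \<in> R \<and> y \<in> (UNIV::'a set)} \<subseteq> R" using rad_mult by blast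
    show "R \<subseteq> span {x * y | x y. x \<in> R \<and> y \<in> (UNIV::'a set)}"
    proof
      fix x assume "x \<in> R" then have "x = x * 1" "x \<in> R" by simp_all
      then show "x \<in> span {x * y | x y. x \<in> R \<and> y \<in> (UNIV::'a set)}" by (blast intro: span_base)
    qed
    show "subspace R" by (rule subspace_rad)
  qed
  then show ?thesis by simp
qed

lemma radpow_left: "x \<in> R \<Longrightarrow> y \<in> radpow k \<Longrightarrow> x * y \<in> radpow (Suc k)"
  unfolding radpow.simps(2) by (rule span_base) blast

lemma radpow_Suc_sub: "radpow (Suc k) \<subseteq> radpow k"
proof (induction k)
  case (Suc k)
  have "{x*y | x y. x \<in> R \<and> y \<in> radpow (Suc k)} \<subseteq> {x*y | x y. x \<in> R \<and> y \<in> radpow k}"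
    using Suc.IH by blast
  from span_mono[OF this] show ?case by (metis radpow.simps(2))
qed simp

lemma radpow_sub_R: "k \<ge> 1 \<Longrightarrow> radpow k \<subseteq> R"
proof (induction k)
  case (Suc k)
  show ?case
  proof (cases "k = 0")
    case True then show ?thesis using radpow_1 by simp
  next
    case False then have "radpow k \<subseteq> R" using Suc.IH by simp
    then show ?thesis using radpow_Suc_sub[of k] by blast
  qed
qed simp

lemma radpow_right: "y \<in> radpow k \<Longrightarrow> z \<in> R \<Longrightarrow> y * z \<in> radpow (Suc k)"
proof (induction k arbitrary: y)
  case 0
  then show ?case using radpow_1 rad_left_mult by simp
next
  case (Suc k)
  have "subspace {y. y * z \<in> radpow (Suc (Suc k))}"
    unfolding subspace_def using subspace_radpow[of "Suc (Suc k)"]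
    by (auto simp: distrib_right subspace_0 subspace_add sc_l[symmetric] subspace_scale simp del: radpow.simps)
  moreover have "x * w * z \<in> radpow (Suc (Suc k))" if "x \<in> R" "w \<in> radpow k" for x w
    using Suc.IH[OF that(2)] radpow_left[OF that(1)] Suc.prems(2) by (simp add: mult.assoc del: radpow.simps)
  ultimately show ?case using span_induct[of y "{x * y | x y. x \<in> R \<and> y \<in> radpow k}" "\<lambda>y. y * z \<in> radpow (Suc (Suc k))"]
    Suc.prems(1) by auto
qed

lemma radpow_leftideal: "y \<in> radpow (Suc k) \<Longrightarrow> a * y \<in> radpow (Suc k)"
proof -
  assume y: "y \<in> radpow (Suc k)"
  have "subspace {y. a * y \<in> radpow (Suc k)}"
    unfolding subspace_def using subspace_radpow[of "Suc k"]
    by (auto simp: distrib_left subspace_0 subspace_add sc_r[symmetric] subspace_scale simp del: radpow.simps)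
  moreover have "a * (x * w) \<in> radpow (Suc k)" if "x \<in> R" "w \<in> radpow k" for x w
    using radpow_left[OF rad_left_mult[OF that(1), of a] that(2)] by (simp add: mult.assoc)
  ultimately show ?thesis using span_induct[of y "{x * y | x y. x \<in> R \<and> y \<in> radpow k}" "\<lambda>y. a * y \<in> radpow (Suc k)"]
    y by auto
qed

end

locale falg_fd = falg +
  assumes fin: "\<exists>S. finite S \<and> module.span scale S = UNIV"
begin

lemma fin_basis: obtains Bas where "finite Bas" "independent Bas" "span Bas = UNIV"
proof -
  obtain S where S: "finite S" "span S = UNIV" using fin by blast
  obtain B where B: "independent B" "UNIV \<subseteq> span B" using basis_exists[of UNIV] by blast
  have "finite B" using independent_span_bound[OF S(1) B(1)] S(2) by auto
  then show ?thesis using that B by auto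
qed

lemma radpow_stable: "\<exists>M. radpow (Suc M) = radpow M"
proof (rule ccontr)
  assume ns: "\<not> ?thesis"
  obtain Bas where Bas: "finite Bas" "independent Bas" "span Bas = UNIV" using fin_basis by blast
  interpret fd: finite_dimensional_vector_space scale Bas using Bas by unfold_locales auto
  have lt: "dim (radpow (Suc k)) < dim (radpow k)" for k
  proof -
    have "span (radpow (Suc k)) \<subset> span (radpow k)"
      using radpow_Suc_sub[of k] ns subspace_radpow[of k] subspace_radpow[of "Suc k"]
      by (metis psubsetI span_eq_iff)
    then show ?thesis by (rule fd.dim_psubset)
  qed
  have "dim (radpow k) + k \<le> dim (radpow 0)" for k
  proof (induction k)
    case (Suc k) then show ?case using lt[of k] by linarith
  qed simp
  from this[of "Suc (dim (radpow 0))"] show False by simp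
qed

lemma finite_indep: "independent B \<Longrightarrow> finite B"
proof -
  assume B: "independent B"
  obtain S where S: "finite S" "span S = UNIV" using fin by blast
  show "finite B" using independent_span_bound[OF S(1) B] S(2) by auto
qed

lemma radpow_nilpotent: "\<exists>N\<ge>1. radpow N = {0}"
proof -
  obtain M0 where M0: "radpow (Suc M0) = radpow M0" using radpow_stable by blast
  define M where "M = Suc M0"
  have stab: "radpow (Suc M) = radpow M" unfolding M_def using M0 by simp
  define P where "P = radpow M"
  have PP: "P = span {x * y | x y. x \<in> R \<and> y \<in> P}" using stab unfolding P_def by simp
  have main: "\<forall>G. finite G \<and> card G = m \<and> G \<subseteq> P \<and> P \<subseteq> lcomb G UNIV \<longrightarrow> P \<subseteq> {0}" for m
  proof (induction m)
    case 0
    show ?case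
    proof (intro allI impI)
      fix G assume "finite G \<and> card G = 0 \<and> G \<subseteq> P \<and> P \<subseteq> lcomb G UNIV"
      then have "G = {}" "P \<subseteq> lcomb G UNIV" by auto
      then show "P \<subseteq> {0}" unfolding lcomb_def by auto
    qed
  next
    case (Suc m)
    show ?case
    proof (intro allI impI)
      fix G assume G: "finite G \<and> card G = Suc m \<and> G \<subseteq> P \<and> P \<subseteq> lcomb G UNIV"
      then have "G \<noteq> {}" by auto
      then obtain g0 where g0: "g0 \<in> G" by blast
      have "span {x * y | x y. x \<in> R \<and> y \<in> P} \<subseteq> lcomb G R"
      proof (rule span_minimal)
        show "subspace (lcomb G R)" by (rule subspace_lcomb[OF subspace_rad])
        show "{x * y | x y. x \<in> R \<and> y \<in> P} \<subseteq> lcomb G R"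
        proof clarify
          fix x y assume xy: "x \<in> R" "y \<in> P"
          then obtain a where a: "y = (\<Sum>g\<in>G. a g * g)" using G unfolding lcomb_def by blast
          show "x * y \<in> lcomb G R" by (rule lcombI[of "\<lambda>g. x * a g"])
            (use xy rad_mult a in \<open>auto simp: sum_distrib_left mult.assoc\<close>)
        qed
      qed
      then have "g0 \<in> lcomb G R" using g0 G PP by blast
      then obtain r where r: "g0 = (\<Sum>g\<in>G. r g * g)" "\<forall>g. r g \<in> R" unfolding lcomb_def by blast
      obtain v where v: "v * (1 - r g0) = 1" using rad_left_inv r(2) by blast
      have "g0 = r g0 * g0 + (\<Sum>g\<in>G - {g0}. r g * g)" using r(1) g0 G by (simp add: sum.remove)
      then have "g0 - r g0 * g0 = (\<Sum>g\<in>G - {g0}. r g * g)" by (simp add: algebra_simps)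
      then have "(1 - r g0) * g0 = (\<Sum>g\<in>G - {g0}. r g * g)" by (simp add: left_diff_distrib)
      then have "v * ((1 - r g0) * g0) = (\<Sum>g\<in>G - {g0}. (v * r g) * g)" by (simp add: sum_distrib_left mult.assoc)
      then have g0e: "g0 = (\<Sum>g\<in>G - {g0}. (v * r g) * g)" using v by (simp add: mult.assoc[symmetric])
      have "P \<subseteq> lcomb (G - {g0}) UNIV"
      proof
        fix y assume "y \<in> P"
        then have "y \<in> lcomb G UNIV" using G by blast
        then obtain a where a: "y = (\<Sum>g\<in>G. a g * g)" unfolding lcomb_def by blast
        then have "y = a g0 * g0 + (\<Sum>g\<in>G - {g0}. a g * g)" using g0 G by (simp add: sum.remove)
        also have "\<dots> = (\<Sum>g\<in>G - {g0}. (a g0 * (v * r g) + a g) * g)"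
          by (subst g0e) (simp add: sum_distrib_left sum.distrib distrib_right mult.assoc)
        finally show "y \<in> lcomb (G - {g0}) UNIV" by (intro lcombI[of "\<lambda>g. a g0 * (v * r g) + a g"]) auto
      qed
      moreover have "finite (G - {g0}) \<and> card (G - {g0}) = m \<and> G - {g0} \<subseteq> P" using G g0 by auto
      ultimately have G': "finite (G - {g0}) \<and> card (G - {g0}) = m \<and> G - {g0} \<subseteq> P \<and> P \<subseteq> lcomb (G - {g0}) UNIV"
        by (simp only: conj_assoc)
      show "P \<subseteq> {0}" using spec[OF Suc.IH, of "G - {g0}"] G' by (rule mp)
    qed
  qed
  obtain Bp where Bp: "Bp \<subseteq> P" "independent Bp" "P \<subseteq> span Bp" "card Bp = dim P" by (rule basis_exists[of P])
  have fBp: "finite Bp" using finite_indep[OF Bp(2)] .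
  have "span Bp \<subseteq> lcomb Bp UNIV"
  proof (rule span_minimal)
    show "Bp \<subseteq> lcomb Bp UNIV" using lcomb_base[OF _ fBp subspace_UNIV] by blast
    show "subspace (lcomb Bp UNIV)" by (rule subspace_lcomb[OF subspace_UNIV])
  qed
  then have "P \<subseteq> lcomb Bp UNIV" using Bp(3) by (rule subset_trans[rotated])
  then have H: "finite Bp \<and> card Bp = card Bp \<and> Bp \<subseteq> P \<and> P \<subseteq> lcomb Bp UNIV" using fBp Bp(1) by simp
  have "P \<subseteq> {0}" using spec[OF main[of "card Bp"], of Bp] H by (rule mp)
  moreover have "0 \<in> P" unfolding P_def by (rule subspace_0[OF subspace_radpow])
  ultimately have "radpow M = {0}" unfolding P_def by auto
  then show ?thesis unfolding M_def by (intro exI[of _ "Suc M0"]) simp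
qed

end


lemma path_from_append:
  "path_from Q1 s t x (ps @ qs) z \<longleftrightarrow> (\<exists>y. path_from Q1 s t x ps y \<and> path_from Q1 s t y qs z)"
  by (induction ps arbitrary: x) auto

lemma path_from_snoc:
  "path_from Q1 s t x (ps @ [b]) z \<longleftrightarrow> path_from Q1 s t x ps (s b) \<and> b \<in> Q1 \<and> t b = z"
  by (auto simp: path_from_append)

lemma path_from_unique: "path_from Q1 s t x ps y \<Longrightarrow> path_from Q1 s t x ps y' \<Longrightarrow> y = y'"
  by (induction ps arbitrary: x) auto

lemma foldl_acc:
  "foldl (\<lambda>acc \<alpha>. \<phi> \<alpha> * acc) a ps = foldl (\<lambda>acc \<alpha>. \<phi> \<alpha> * acc) 1 ps * (a::'a::ring_1)"
proof (induction ps arbitrary: a)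
  case (Cons b ps)
  show ?case using Cons.IH[of "\<phi> b * a"] Cons.IH[of "\<phi> b"] by (simp add: mult.assoc)
qed simp

locale qalg = falg_fd scale for scale :: "'k::field \<Rightarrow> 'a::ring_1 \<Rightarrow> 'a" +
  fixes n :: nat and e :: "nat \<Rightarrow> 'a" and Q1 :: "'q set" and s t :: "'q \<Rightarrow> nat"
  assumes idem: "complete_prim_orth_idems n e"
  and ends: "\<forall>\<alpha>\<in>Q1. s \<alpha> \<in> {1..n} \<and> t \<alpha> \<in> {1..n}"
  and finQ: "finite Q1"
begin

lemma e_idem: "i \<in> {1..n} \<Longrightarrow> e i * e i = e i"
  using idem unfolding complete_prim_orth_idems_def primitive_idempotent_def by blast
lemma e_ne0: "i \<in> {1..n} \<Longrightarrow> e i \<noteq> 0"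
  using idem unfolding complete_prim_orth_idems_def primitive_idempotent_def by blast
lemma e_orth: "i \<in> {1..n} \<Longrightarrow> j \<in> {1..n} \<Longrightarrow> i \<noteq> j \<Longrightarrow> e i * e j = 0"
  using idem unfolding complete_prim_orth_idems_def by blast
lemma e_sum: "sum e {1..n} = 1"
  using idem unfolding complete_prim_orth_idems_def by blast
lemma e_mult: "i \<in> {1..n} \<Longrightarrow> j \<in> {1..n} \<Longrightarrow> e i * e j = (if i = j then e i else 0)"
  using e_idem e_orth by auto
lemma e_inj: "inj_on e {1..n}"
proof
  fix i j assume ij: "i \<in> {1..n}" "j \<in> {1..n}" "e i = e j"
  show "i = j"
  proof (rule ccontr)
    assume "i \<noteq> j"
    then have "e i * e j = 0" using e_orth ij by blast
    then have "e i = 0" using ij e_idem by metis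
    then show False using e_ne0 ij by blast
  qed
qed
lemma e_notR: "i \<in> {1..n} \<Longrightarrow> e i \<notin> R"
  using idem_not_rad e_idem e_ne0 by blast

lemma left_e: "j \<in> {1..n} \<Longrightarrow> i \<in> {1..n} \<Longrightarrow> x = e j * x \<Longrightarrow> e i * x = (if i = j then x else 0)"
  by (metis e_mult mult.assoc mult_zero_left)
lemma right_e: "j \<in> {1..n} \<Longrightarrow> i \<in> {1..n} \<Longrightarrow> x = x * e j \<Longrightarrow> x * e i = (if i = j then x else 0)"
  by (metis e_mult mult.assoc mult_zero_right)

lemma sum_e_left: "j \<in> {1..n} \<Longrightarrow> x = e j * x \<Longrightarrow> (\<Sum>i\<in>{1..n}. f i * (e i * x)) = f j * x"
proof -
  assume j: "j \<in> {1..n}" "x = e j * x"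
  have "(\<Sum>i\<in>{1..n}. f i * (e i * x)) = (\<Sum>i\<in>{1..n}. if i = j then f i * x else 0)"
    by (rule sum.cong) (use left_e[OF j(1) _ j(2)] in auto)
  also have "\<dots> = f j * x" using j by (simp add: sum.delta)
  finally show ?thesis .
qed

lemma sum_e_right: "j \<in> {1..n} \<Longrightarrow> x = x * e j \<Longrightarrow> (\<Sum>i\<in>{1..n}. (x * e i) * f i) = x * f j"
proof -
  assume j: "j \<in> {1..n}" "x = x * e j"
  have "(\<Sum>i\<in>{1..n}. (x * e i) * f i) = (\<Sum>i\<in>{1..n}. if i = j then x * f i else 0)"
    by (rule sum.cong) (use right_e[OF j(1) _ j(2)] in auto)
  also have "\<dots> = x * f j" using j by (simp add: sum.delta)
  finally show ?thesis .
qed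

lemma indepE: "independent (e ` {1..n})"
proof (rule independent_if_scalars_zero)
  show "finite (e ` {1..n})" by simp
next
  fix f v assume h: "(\<Sum>x\<in>e ` {1..n}. scale (f x) x) = 0" "v \<in> e ` {1..n}"
  then obtain j where j: "j \<in> {1..n}" "v = e j" by blast
  have "(\<Sum>x\<in>e ` {1..n}. scale (f x) x) = (\<Sum>i\<in>{1..n}. scale (f (e i)) (e i))"
    by (rule sum.reindex[OF e_inj, unfolded comp_def])
  then have "(\<Sum>i\<in>{1..n}. scale (f (e i)) (e i)) * e j = 0" using h by simp
  moreover have "(\<Sum>i\<in>{1..n}. scale (f (e i)) (e i)) * e j = (\<Sum>i\<in>{1..n}. scale (f (e i)) (e i * e j))"
    by (simp add: sum_distrib_right sc_l)
  moreover have "\<dots> = (\<Sum>i\<in>{1..n}. if i = j then scale (f (e j)) (e j) else 0)"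
    by (rule sum.cong) (use j e_mult in auto)
  moreover have "\<dots> = scale (f (e j)) (e j)" using j by (simp add: sum.delta)
  ultimately have "scale (f (e j)) (e j) = 0" by simp
  then show "f v = 0" using e_ne0 j by simp
qed


definition corner_ok :: "('q \<Rightarrow> 'a) \<Rightarrow> bool" where
  "corner_ok \<phi> \<longleftrightarrow> (\<forall>\<alpha>\<in>Q1. \<phi> \<alpha> = e (t \<alpha>) * \<phi> \<alpha> * e (s \<alpha>))"

lemma path_end: "path_from Q1 s t x ps y \<Longrightarrow> x \<in> {1..n} \<Longrightarrow> y \<in> {1..n}"
  by (induction ps arbitrary: x) (use ends in auto)

lemma pv_snoc:
  assumes c: "corner_ok \<phi>" and p: "path_from Q1 s t x ps (s b)" and b: "b \<in> Q1"
  shows "path_val e \<phi> x (ps @ [b]) = \<phi> b * path_val e \<phi> x ps"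
proof (cases "ps = []")
  case True
  then have "x = s b" using p by simp
  then have "\<phi> b * e x = \<phi> b" using c b e_idem ends unfolding corner_ok_def by (metis mult.assoc)
  then show ?thesis using True unfolding path_val_def by simp
next
  case False
  then show ?thesis unfolding path_val_def by simp
qed

lemma pv_corner:
  assumes c: "corner_ok \<phi>" and p: "path_from Q1 s t x ps y" and x: "x \<in> {1..n}"
  shows "path_val e \<phi> x ps = e y * path_val e \<phi> x ps \<and> path_val e \<phi> x ps = path_val e \<phi> x ps * e x"
  using p
proof (induction ps arbitrary: y rule: rev_induct)
  case Nil
  then show ?case using x e_idem unfolding path_val_def by simp
next
  case (snoc b ps)
  then have p1: "path_from Q1 s t x ps (s b)" "b \<in> Q1" "t b = y" using path_from_snoc by metis+
  have eq: "path_val e \<phi> x (ps @ [b]) = \<phi> b * path_val e \<phi> x ps" using pv_snoc[OF c p1(1,2)] .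
  have "\<phi> b = e y * \<phi> b" using c p1 e_idem ends unfolding corner_ok_def by (metis mult.assoc)
  then have "e y * (\<phi> b * path_val e \<phi> x ps) = \<phi> b * path_val e \<phi> x ps" by (metis mult.assoc)
  moreover have "\<phi> b * path_val e \<phi> x ps * e x = \<phi> b * path_val e \<phi> x ps"
    using snoc.IH[OF p1(1)] by (metis mult.assoc)
  ultimately show ?case using eq by simp
qed

lemma pv_append:
  assumes c: "corner_ok \<phi>" and p: "path_from Q1 s t x ps y" and q: "path_from Q1 s t y qs z"
    and x: "x \<in> {1..n}"
  shows "path_val e \<phi> x (ps @ qs) = path_val e \<phi> y qs * path_val e \<phi> x ps"
  using q
proof (induction qs arbitrary: z rule: rev_induct)
  case Nil
  then show ?case using pv_corner[OF c p x] unfolding path_val_def by simp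
next
  case (snoc b qs)
  then have q1: "path_from Q1 s t y qs (s b)" "b \<in> Q1" "t b = z" using path_from_snoc by metis+
  have pq: "path_from Q1 s t x (ps @ qs) (s b)" using p q1(1) path_from_append by metis
  have "path_val e \<phi> x (ps @ qs @ [b]) = \<phi> b * path_val e \<phi> x (ps @ qs)"
    using pv_snoc[OF c pq q1(2)] by simp
  also have "\<dots> = \<phi> b * path_val e \<phi> y qs * path_val e \<phi> x ps" using snoc.IH[OF q1(1)] by (simp add: mult.assoc)
  also have "\<dots> = path_val e \<phi> y (qs @ [b]) * path_val e \<phi> x ps" using pv_snoc[OF c q1(1,2)] by simp
  finally show ?case by simp
qed

lemma pv_mult_zero:
  assumes c: "corner_ok \<phi>" and p: "path_from Q1 s t x ps y" and q: "path_from Q1 s t x' qs z"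
    and x: "x \<in> {1..n}" and x': "x' \<in> {1..n}" and ne: "y \<noteq> x'"
  shows "path_val e \<phi> x' qs * path_val e \<phi> x ps = 0"
proof -
  have y: "y \<in> {1..n}" using path_end p x by blast
  have "path_val e \<phi> x' qs * path_val e \<phi> x ps = path_val e \<phi> x' qs * e x' * (e y * path_val e \<phi> x ps)"
    using pv_corner[OF c p x] pv_corner[OF c q x'] by simp
  also have "\<dots> = path_val e \<phi> x' qs * (e x' * e y) * path_val e \<phi> x ps" by (simp add: mult.assoc)
  also have "\<dots> = 0" using e_orth[OF x' y] ne by simp
  finally show ?thesis .
qed

definition pvs :: "('q \<Rightarrow> 'a) \<Rightarrow> nat \<Rightarrow> 'a set" where
  "pvs \<phi> k = {path_val e \<phi> x ps | x ps. is_path n Q1 s t (x, ps) \<and> k \<le> length ps}"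

lemma pvs_mult:
  assumes c: "corner_ok \<phi>" and a: "a \<in> pvs \<phi> k" and b: "b \<in> pvs \<phi> m"
  shows "a * b \<in> span (pvs \<phi> (k + m))"
proof -
  obtain x' qs where A: "a = path_val e \<phi> x' qs" "x' \<in> {1..n}" "\<exists>z. path_from Q1 s t x' qs z" "k \<le> length qs"
    using a unfolding pvs_def is_path_def by auto
  obtain x ps where B: "b = path_val e \<phi> x ps" "x \<in> {1..n}" "\<exists>z. path_from Q1 s t x ps z" "m \<le> length ps"
    using b unfolding pvs_def is_path_def by auto
  obtain y where y: "path_from Q1 s t x ps y" using B by blast
  obtain z where z: "path_from Q1 s t x' qs z" using A by blast
  show ?thesis
  proof (cases "y = x'")
    case True
    then have "a * b = path_val e \<phi> x (ps @ qs)" using pv_append[OF c y _ B(2)] z A B by simp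
    moreover have "is_path n Q1 s t (x, ps @ qs)" using y z True B(2) path_from_append unfolding is_path_def by fastforce
    moreover have "k + m \<le> length (ps @ qs)" using A B by simp
    ultimately have "a * b \<in> pvs \<phi> (k + m)" unfolding pvs_def by blast
    then show ?thesis by (rule span_base)
  next
    case False
    then have "a * b = 0" using pv_mult_zero[OF c y z B(2) A(2)] A B by simp
    then show ?thesis using span_zero by simp
  qed
qed

lemma span_pvs_mult:
  assumes c: "corner_ok \<phi>" and a: "a \<in> span (pvs \<phi> k)" and b: "b \<in> span (pvs \<phi> m)"
  shows "a * b \<in> span (pvs \<phi> (k + m))"
proof -
  have "a * b \<in> span {x * y | x y. x \<in> pvs \<phi> k \<and> y \<in> pvs \<phi> m}" by (rule span_mult[OF a b])
  moreover have "span {x * y | x y. x \<in> pvs \<phi> k \<and> y \<in> pvs \<phi> m} \<subseteq> span (pvs \<phi> (k + m))"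
    by (rule span_minimal) (use pvs_mult[OF c] in auto)
  ultimately show ?thesis by blast
qed

lemma pvs_mono: "k \<le> m \<Longrightarrow> pvs \<phi> m \<subseteq> pvs \<phi> k"
  unfolding pvs_def by (force intro: le_trans)

lemma pvs_0_E: "e ` {1..n} \<subseteq> pvs \<phi> 0"
proof
  fix v assume "v \<in> e ` {1..n}"
  then obtain i where i: "i \<in> {1..n}" "v = e i" by blast
  then have "v = path_val e \<phi> i []" "is_path n Q1 s t (i, [])" unfolding path_val_def is_path_def by auto
  then show "v \<in> pvs \<phi> 0" unfolding pvs_def by blast
qed


lemma pa_map_superset:
  assumes "finite F" "{p. \<rho> p \<noteq> 0} \<subseteq> F"
  shows "pa_map scale e \<phi> \<rho> = (\<Sum>p\<in>F. scale (\<rho> p) (path_val e \<phi> (fst p) (snd p)))"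
  unfolding pa_map_def by (rule sum.mono_neutral_left) (use assms in auto)

lemma pa_elem_finite: "pa_elem n Q1 s t \<rho> \<Longrightarrow> finite {p. \<rho> p \<noteq> 0}"
  unfolding pa_elem_def by blast

definition pa_range :: "('q \<Rightarrow> 'a) \<Rightarrow> 'a set" where
  "pa_range \<phi> = {pa_map scale e \<phi> \<rho> | \<rho>. pa_elem n Q1 s t \<rho>}"

lemma subspace_pa_range: "subspace (pa_range \<phi>)"
  unfolding subspace_def
proof (intro conjI ballI allI)
  have "pa_elem n Q1 s t (\<lambda>_. 0)" unfolding pa_elem_def by simp
  moreover have "pa_map scale e \<phi> (\<lambda>_. 0) = 0" unfolding pa_map_def by simp
  ultimately show "0 \<in> pa_range \<phi>" unfolding pa_range_def by force
next
  fix a b assume "a \<in> pa_range \<phi>" "b \<in> pa_range \<phi>"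
  then obtain \<rho>1 \<rho>2 where r: "a = pa_map scale e \<phi> \<rho>1" "pa_elem n Q1 s t \<rho>1"
    "b = pa_map scale e \<phi> \<rho>2" "pa_elem n Q1 s t \<rho>2" unfolding pa_range_def by blast
  let ?F = "{p. \<rho>1 p \<noteq> 0} \<union> {p. \<rho>2 p \<noteq> 0}"
  have fF: "finite ?F" using r pa_elem_finite by blast
  have pe: "pa_elem n Q1 s t (\<lambda>p. \<rho>1 p + \<rho>2 p)"
    unfolding pa_elem_def
  proof
    show "finite {p. \<rho>1 p + \<rho>2 p \<noteq> 0}" by (rule finite_subset[OF _ fF]) auto
    show "\<forall>p. \<rho>1 p + \<rho>2 p \<noteq> 0 \<longrightarrow> is_path n Q1 s t p"
      using r(2,4) unfolding pa_elem_def by (metis add.left_neutral add.right_neutral)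
  qed
  have "pa_map scale e \<phi> (\<lambda>p. \<rho>1 p + \<rho>2 p) = (\<Sum>p\<in>?F. scale (\<rho>1 p + \<rho>2 p) (path_val e \<phi> (fst p) (snd p)))"
    by (rule pa_map_superset[OF fF]) auto
  also have "\<dots> = (\<Sum>p\<in>?F. scale (\<rho>1 p) (path_val e \<phi> (fst p) (snd p))) + (\<Sum>p\<in>?F. scale (\<rho>2 p) (path_val e \<phi> (fst p) (snd p)))"
    by (simp add: scale_left_distrib sum.distrib)
  also have "\<dots> = a + b" using r pa_map_superset[OF fF] by auto
  finally show "a + b \<in> pa_range \<phi>" using pe unfolding pa_range_def by force
next
  fix c a assume "a \<in> pa_range \<phi>"
  then obtain \<rho>1 where r: "a = pa_map scale e \<phi> \<rho>1" "pa_elem n Q1 s t \<rho>1" unfolding pa_range_def by blast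
  let ?F = "{p. \<rho>1 p \<noteq> 0}"
  have fF: "finite ?F" using r pa_elem_finite by blast
  have pe: "pa_elem n Q1 s t (\<lambda>p. c * \<rho>1 p)"
    unfolding pa_elem_def
  proof
    show "finite {p. c * \<rho>1 p \<noteq> 0}" by (rule finite_subset[OF _ fF]) auto
    show "\<forall>p. c * \<rho>1 p \<noteq> 0 \<longrightarrow> is_path n Q1 s t p"
      using r(2) unfolding pa_elem_def by auto
  qed
  have "pa_map scale e \<phi> (\<lambda>p. c * \<rho>1 p) = (\<Sum>p\<in>?F. scale (c * \<rho>1 p) (path_val e \<phi> (fst p) (snd p)))"
    by (rule pa_map_superset[OF fF]) auto
  also have "\<dots> = scale c a" using r pa_map_superset[OF fF] by (simp add: scale_sum_right)
  finally show "scale c a \<in> pa_range \<phi>" using pe unfolding pa_range_def by force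
qed

lemma pvs_pa_range: "pvs \<phi> 0 \<subseteq> pa_range \<phi>"
proof
  fix v assume "v \<in> pvs \<phi> 0"
  then obtain x ps where v: "v = path_val e \<phi> x ps" "is_path n Q1 s t (x, ps)" unfolding pvs_def by blast
  let ?r = "\<lambda>p. if p = (x, ps) then (1::'k) else 0"
  have pe: "pa_elem n Q1 s t ?r" unfolding pa_elem_def using v by auto
  have "pa_map scale e \<phi> ?r = (\<Sum>p\<in>{(x,ps)}. scale (?r p) (path_val e \<phi> (fst p) (snd p)))"
    by (rule pa_map_superset) auto
  then have "pa_map scale e \<phi> ?r = v" using v by simp
  then show "v \<in> pa_range \<phi>" using pe unfolding pa_range_def by force
qed

lemma span_pvs_pa_range: "span (pvs \<phi> 0) \<subseteq> pa_range \<phi>"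
  by (rule span_minimal[OF pvs_pa_range subspace_pa_range])

lemma pa_range_span: "pa_range \<phi> \<subseteq> span (pvs \<phi> 0)"
proof
  fix a assume "a \<in> pa_range \<phi>"
  then obtain \<rho> where r: "a = pa_map scale e \<phi> \<rho>" "pa_elem n Q1 s t \<rho>" unfolding pa_range_def by blast
  show "a \<in> span (pvs \<phi> 0)" unfolding r(1) pa_map_def
  proof (rule span_sum)
    fix p assume "p \<in> {p. \<rho> p \<noteq> 0}"
    then have "is_path n Q1 s t p" using r(2) unfolding pa_elem_def by blast
    then have "path_val e \<phi> (fst p) (snd p) \<in> pvs \<phi> 0" unfolding pvs_def by (cases p) auto
    then show "scale (\<rho> p) (path_val e \<phi> (fst p) (snd p)) \<in> span (pvs \<phi> 0)" by (intro span_scale span_base)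
  qed
qed

end


context qalg begin

lemma class_self: "d \<in> Der0 scale n e \<Longrightarrow> d \<in> hh_class scale n e d"
proof -
  assume d: "d \<in> Der0 scale n e"
  have "(\<lambda>a. d a - d a) = (\<lambda>a. 0 * a - a * 0)" by simp
  moreover have "(0::'a) \<in> span (e ` {1..n})" by (rule span_zero)
  ultimately have "(\<lambda>a. d a - d a) \<in> Int0 scale n e" unfolding Int0_def by blast
  then show ?thesis using d unfolding hh_class_def by blast
qed

lemma pres_corner: "presentation n Q1 s t scale e \<phi> \<Longrightarrow> corner_ok \<phi>"
  unfolding presentation_def corner_ok_def by blast

lemma pres_span: "presentation n Q1 s t scale e \<phi> \<Longrightarrow> span (pvs \<phi> 0) = UNIV"
proof -
  assume p: "presentation n Q1 s t scale e \<phi>"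
  have "UNIV \<subseteq> pa_range \<phi>"
  proof
    fix a :: 'a
    obtain \<rho> where "pa_elem n Q1 s t \<rho>" "pa_map scale e \<phi> \<rho> = a" using p unfolding presentation_def by blast
    then show "a \<in> pa_range \<phi>" unfolding pa_range_def by blast
  qed
  then show ?thesis using pa_range_span by blast
qed

lemma indicator_pv:
  assumes "is_path n Q1 s t (x, ps)"
  shows "pa_elem n Q1 s t (\<lambda>p. if p = (x, ps) then (1::'k) else 0)"
    and "pa_map scale e \<phi> (\<lambda>p. if p = (x, ps) then (1::'k) else 0) = path_val e \<phi> x ps"
proof -
  let ?r = "\<lambda>p. if p = (x, ps) then (1::'k) else 0"
  show "pa_elem n Q1 s t ?r" unfolding pa_elem_def using assms by auto
  have "pa_map scale e \<phi> ?r = (\<Sum>p\<in>{(x,ps)}. scale (?r p) (path_val e \<phi> (fst p) (snd p)))"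
    by (rule pa_map_superset) auto
  then show "pa_map scale e \<phi> ?r = path_val e \<phi> x ps" by simp
qed

lemma pres_long_zero:
  assumes p: "presentation n Q1 s t scale e \<phi>"
  obtains N where "N \<ge> 2" "pvs \<phi> N \<subseteq> {0}"
proof -
  obtain N where N: "N \<ge> 2" "arrow_ideal_pow n Q1 s t N \<subseteq> pa_kernel n Q1 s t scale e \<phi>"
    using p unfolding presentation_def by blast
  have "pvs \<phi> N \<subseteq> {0}"
  proof
    fix v assume "v \<in> pvs \<phi> N"
    then obtain x ps where v: "v = path_val e \<phi> x ps" "is_path n Q1 s t (x, ps)" "N \<le> length ps"
      unfolding pvs_def by blast
    let ?r = "\<lambda>p. if p = (x, ps) then (1::'k) else 0"
    have "?r \<in> arrow_ideal_pow n Q1 s t N" unfolding arrow_ideal_pow_def using indicator_pv(1)[OF v(2)] v(3) by auto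
    then have "pa_map scale e \<phi> ?r = 0" using N(2) unfolding pa_kernel_def by blast
    then show "v \<in> {0}" using indicator_pv(2)[OF v(2), of \<phi>] v(1) by simp
  qed
  then show ?thesis using that N(1) by blast
qed

lemma pres_rad:
  assumes p: "presentation n Q1 s t scale e \<phi>"
  shows "span (pvs \<phi> 1) \<subseteq> R"
proof
  fix x assume x: "x \<in> span (pvs \<phi> 1)"
  have c: "corner_ok \<phi>" by (rule pres_corner[OF p])
  obtain N where N: "N \<ge> 2" "pvs \<phi> N \<subseteq> {0}" using pres_long_zero[OF p] by blast
  show "x \<in> R"
  proof (rule nil_rad)
    fix a :: 'a
    have a: "a \<in> span (pvs \<phi> 0)" using pres_span[OF p] by simp
    have xa: "x * a \<in> span (pvs \<phi> 1)" using span_pvs_mult[OF c x a] by simp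
    have pw: "(x * a) ^ Suc k \<in> span (pvs \<phi> (Suc k))" for k
    proof (induction k)
      case 0 then show ?case using xa by simp
    next
      case (Suc k)
      have "(x * a) ^ Suc (Suc k) = (x * a) ^ Suc k * (x * a)" by (rule power_Suc2)
      also have "\<dots> \<in> span (pvs \<phi> (Suc k + 1))" by (rule span_pvs_mult[OF c Suc xa])
      finally show ?case by simp
    qed
    have "span (pvs \<phi> (Suc N)) \<subseteq> span (pvs \<phi> N)" by (rule span_mono[OF pvs_mono]) simp
    also have "\<dots> \<subseteq> span {0}" by (rule span_mono[OF N(2)])
    also have "\<dots> = {0}" by simp
    finally have "(x * a) ^ Suc N = 0" using pw[of N] by blast
    then show "\<exists>N. (x * a) ^ N = 0" by blast
  qed
qed

lemma rhs_to_lhs: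
  assumes p: "presentation n Q1 s t scale e \<phi>"
    and D: "D \<subseteq> theta_image n Q1 s t scale e \<phi> x0 \<gamma>"
  shows "diagonalizable scale n e D"
proof -
  have c: "corner_ok \<phi>" by (rule pres_corner[OF p])
  obtain B where B: "e ` {1..n} \<subseteq> B" "B \<subseteq> pvs \<phi> 0" "independent B" "pvs \<phi> 0 \<subseteq> span B"
    using maximal_independent_subset_extend[OF pvs_0_E indepE] by blast
  have spB: "span B = UNIV"
  proof -
    have "span (pvs \<phi> 0) \<subseteq> span B" using B(4) span_minimal subspace_span by blast
    then show ?thesis using pres_span[OF p] by blast
  qed
  have bpath: "\<exists>x ps y. b = path_val e \<phi> x ps \<and> x \<in> {1..n} \<and> path_from Q1 s t x ps y" if "b \<in> B" for b
    using B(2) that unfolding pvs_def is_path_def by auto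
  have ab: "algebra_basis scale n e B"
    unfolding algebra_basis_def
  proof (intro conjI)
    show "\<not> dependent B" using B(3) .
    show "span B = UNIV" by (rule spB)
    show "\<forall>b\<in>B. \<exists>i\<in>{1..n}. \<exists>j\<in>{1..n}. b \<in> corner e j i UNIV"
    proof
      fix b assume "b \<in> B"
      then obtain x ps y where h: "b = path_val e \<phi> x ps" "x \<in> {1..n}" "path_from Q1 s t x ps y" using bpath by blast
      have y: "y \<in> {1..n}" using path_end h by blast
      have "b = e y * b * e x" using pv_corner[OF c h(3) h(2)] h(1) by metis
      then have "b \<in> corner e y x UNIV" unfolding corner_def by blast
      then show "\<exists>i\<in>{1..n}. \<exists>j\<in>{1..n}. b \<in> corner e j i UNIV" using h(2) y by blast
    qed
    show "e ` {1..n} \<subseteq> B" by (rule B(1))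
    show "B - e ` {1..n} \<subseteq> R"
    proof
      fix b assume b: "b \<in> B - e ` {1..n}"
      then obtain x ps y where h: "b = path_val e \<phi> x ps" "x \<in> {1..n}" "path_from Q1 s t x ps y" using bpath by blast
      show "b \<in> R"
      proof (cases "ps = []")
        case True
        then have "b = e x" using h unfolding path_val_def by simp
        then show ?thesis using b h(2) by blast
      next
        case False
        then have "b \<in> pvs \<phi> 1" using h unfolding pvs_def is_path_def by (auto simp: Suc_le_eq)
        then show ?thesis using pres_rad[OF p] span_base by blast
      qed
    qed
  qed
  have "\<forall>cl\<in>D. \<exists>d\<in>cl. \<forall>b\<in>B. \<exists>c. d b = scale c b"
  proof
    fix cl assume "cl \<in> D"
    then have "cl \<in> theta_image n Q1 s t scale e \<phi> x0 \<gamma>" using D by blast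
    then obtain f d where fd: "d \<in> Der0 scale n e" "cl = hh_class scale n e d"
      "\<forall>x y ps. x \<in> {1..n} \<and> path_from Q1 s t x ps y \<longrightarrow>
           d (path_val e \<phi> x ps) = scale (f (\<gamma> x @ path_walk ps @ walk_inv (\<gamma> y))) (path_val e \<phi> x ps)"
      unfolding theta_image_def by blast
    have "d \<in> cl" using class_self[OF fd(1)] fd(2) by simp
    moreover have "\<forall>b\<in>B. \<exists>c. d b = scale c b"
    proof
      fix b assume "b \<in> B"
      then obtain x ps y where h: "b = path_val e \<phi> x ps" "x \<in> {1..n}" "path_from Q1 s t x ps y" using bpath by blast
      then show "\<exists>c. d b = scale c b" using fd(3) by blast
    qed
    ultimately show "\<exists>d\<in>cl. \<forall>b\<in>B. \<exists>c. d b = scale c b" by blast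
  qed
  then show ?thesis using ab unfolding diagonalizable_def by blast
qed

end


context falg begin

lemma corner_subspace: "subspace X \<Longrightarrow> subspace (corner e j i X)"
  unfolding subspace_def corner_def
proof (intro conjI ballI allI; (elim conjE)?)
  assume X: "0 \<in> X" "\<forall>x\<in>X. \<forall>y\<in>X. x + y \<in> X" "\<forall>c. \<forall>x\<in>X. scale c x \<in> X"
  have "(0::'a) = e j * 0 * e i" by simp
  then show "0 \<in> {e j * x * e i |x. x \<in> X}" using X(1) by blast
next
  fix u v assume X: "0 \<in> X" "\<forall>x\<in>X. \<forall>y\<in>X. x + y \<in> X" "\<forall>c. \<forall>x\<in>X. scale c x \<in> X"
    and uv: "u \<in> {e j * x * e i |x. x \<in> X}" "v \<in> {e j * x * e i |x. x \<in> X}"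
  then obtain x y where "u = e j * x * e i" "v = e j * y * e i" "x \<in> X" "y \<in> X" by blast
  then have "u + v = e j * (x + y) * e i" "x + y \<in> X" using X by (auto simp: distrib_left distrib_right)
  then show "u + v \<in> {e j * x * e i |x. x \<in> X}" by blast
next
  fix c u assume X: "0 \<in> X" "\<forall>x\<in>X. \<forall>y\<in>X. x + y \<in> X" "\<forall>c. \<forall>x\<in>X. scale c x \<in> X"
    and u: "u \<in> {e j * x * e i |x. x \<in> X}"
  then obtain x where "u = e j * x * e i" "x \<in> X" by blast
  then have "scale c u = e j * scale c x * e i" "scale c x \<in> X" using X by (auto, metis sc_l sc_r)
  then show "scale c u \<in> {e j * x * e i |x. x \<in> X}" by blast
qed

lemma corner_mono: "X \<subseteq> Y \<Longrightarrow> corner e j i X \<subseteq> corner e j i Y"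
  unfolding corner_def by blast

lemma corner_R: "corner e j i R \<subseteq> R"
  unfolding corner_def using rad_left_mult rad_mult by (auto simp: mult.assoc)

lemma rad_sq_R: "rad_sq scale \<subseteq> R"
  unfolding rad_sq_def by (rule span_minimal[OF _ subspace_rad]) (use rad_mult in blast)

lemma rad_sq_two: "w \<in> rad_sq scale \<Longrightarrow> a * w * b \<in> rad_sq scale"
proof -
  assume w: "w \<in> rad_sq scale"
  let ?G = "{x * y | x y. x \<in> R \<and> y \<in> R}"
  have "subspace {w. a * w * b \<in> span ?G}"
    unfolding subspace_def
    by (auto simp: distrib_left distrib_right span_zero span_add sc_l[symmetric] sc_r[symmetric] span_scale)
  moreover have "a * (x * y) * b \<in> span ?G" if "x \<in> R" "y \<in> R" for x y
  proof -
    have "a * (x * y) * b = (a * x) * (y * b)" by (simp add: mult.assoc)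
    moreover have "a * x \<in> R" "y * b \<in> R" using that rad_left_mult rad_mult by auto
    ultimately show ?thesis by (blast intro: span_base)
  qed
  ultimately show ?thesis using span_induct[of w ?G "\<lambda>w. a * w * b \<in> span ?G"] w unfolding rad_sq_def by blast
qed

lemma corner_rad_sq: "corner e j i (rad_sq scale) \<subseteq> rad_sq scale"
  unfolding corner_def using rad_sq_two by blast

end

locale qbasis = qalg scale n e Q1 s t
  for scale :: "'k::field \<Rightarrow> 'a::ring_1 \<Rightarrow> 'a" and n e and Q1 :: "'q set" and s t +
  fixes B :: "'a set"
  assumes ab: "algebra_basis scale n e B"
  and oq: "\<forall>i\<in>{1..n}. \<forall>j\<in>{1..n}. card {\<alpha>\<in>Q1. s \<alpha> = i \<and> t \<alpha> = j} =
        dim (corner e j i R) - dim (corner e j i (rad_sq scale))"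
begin

abbreviation E :: "'a set" where "E \<equiv> e ` {1..n}"

lemma B_indep: "independent B" using ab unfolding algebra_basis_def by blast
lemma B_span: "span B = UNIV" using ab unfolding algebra_basis_def by blast
lemma E_B: "E \<subseteq> B" using ab unfolding algebra_basis_def by blast
lemma BE_R: "B - E \<subseteq> R" using ab unfolding algebra_basis_def by blast
lemma B_corner: "b \<in> B \<Longrightarrow> \<exists>i\<in>{1..n}. \<exists>j\<in>{1..n}. b = e j * b * e i"
proof -
  assume "b \<in> B"
  then obtain i j y where h: "i \<in> {1..n}" "j \<in> {1..n}" "b = e j * y * e i"
    using ab unfolding algebra_basis_def corner_def by blast
  then have "e j * b * e i = (e j * e j) * y * (e i * e i)" by (simp add: mult.assoc)
  then have "e j * b * e i = b" using h e_idem by simp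
  then show ?thesis using h by metis
qed
lemma B_ne0: "b \<in> B \<Longrightarrow> b \<noteq> 0"
  using B_indep dependent_zero by blast

lemma spanE_R: assumes u: "u \<in> span E" "u \<in> R" shows "u = 0"
proof -
  have fE: "finite E" by simp
  obtain c where c: "u = (\<Sum>v\<in>E. scale (c v) v)" using u(1) span_finite[OF fE] by blast
  have u2: "u = (\<Sum>i\<in>{1..n}. scale (c (e i)) (e i))"
    using c sum.reindex[OF e_inj, of "\<lambda>v. scale (c v) v"] by simp
  have ck: "c (e k) = 0" if k: "k \<in> {1..n}" for k
  proof (rule ccontr)
    assume nz: "c (e k) \<noteq> 0"
    have "u * e k = (\<Sum>i\<in>{1..n}. scale (c (e i)) (e i * e k))" using u2 by (simp add: sum_distrib_right sc_l)
    also have "\<dots> = (\<Sum>i\<in>{1..n}. if i = k then scale (c (e k)) (e k) else 0)"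
      by (rule sum.cong) (use k e_mult in auto)
    also have "\<dots> = scale (c (e k)) (e k)" using k by (simp add: sum.delta)
    finally have "scale (c (e k)) (e k) \<in> R" using rad_mult u(2) by metis
    then have "scale (inverse (c (e k))) (scale (c (e k)) (e k)) \<in> R" by (rule rad_scale)
    then have "e k \<in> R" using nz by simp
    then show False using e_notR k by blast
  qed
  show ?thesis using u2 ck by simp
qed

lemma R_span: "R \<subseteq> span (B - E)"
proof
  fix w assume w: "w \<in> R"
  have "B = E \<union> (B - E)" using E_B by blast
  then have "w \<in> span (E \<union> (B - E))" using B_span by simp
  then obtain u v where uv: "w = u + v" "u \<in> span E" "v \<in> span (B - E)" unfolding span_Un by blast
  have "v \<in> R" using uv(3) span_minimal[OF BE_R subspace_rad] by blast
  then have "u \<in> R" using w uv(1) rad_diff by (metis add_diff_cancel_right')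
  then have "u = 0" using spanE_R uv(2) by blast
  then show "w \<in> span (B - E)" using uv by simp
qed

definition Bij :: "nat \<Rightarrow> nat \<Rightarrow> 'a set" where
  "Bij i j = {b \<in> B - E. b = e j * b * e i}"

lemma C_span: assumes ij: "i \<in> {1..n}" "j \<in> {1..n}" shows "corner e j i R = span (Bij i j)"
proof
  show "corner e j i R \<subseteq> span (Bij i j)"
  proof
    fix z assume "z \<in> corner e j i R"
    then obtain r where r: "z = e j * r * e i" "r \<in> R" unfolding corner_def by blast
    have "r \<in> span (B - E)" using R_span r(2) by blast
    moreover have "subspace {r. e j * r * e i \<in> span (Bij i j)}"
      unfolding subspace_def
      by (auto simp: distrib_left distrib_right span_zero span_add sc_l[symmetric] sc_r[symmetric] span_scale)
    moreover have "e j * b * e i \<in> span (Bij i j)" if b: "b \<in> B - E" for b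
    proof -
      obtain i' j' where h: "i' \<in> {1..n}" "j' \<in> {1..n}" "b = e j' * b * e i'" using B_corner b by blast
      show ?thesis
      proof (cases "i = i' \<and> j = j'")
        case True
        then have "b \<in> Bij i j" using b h unfolding Bij_def by auto
        then show ?thesis using h True by (auto intro: span_base)
      next
        case False
        have "e j * b * e i = 0"
        proof (cases "i = i'")
          case False
          have "e j * b * e i = e j * e j' * b * (e i' * e i)" using h by (metis mult.assoc)
          then show ?thesis using e_orth[OF h(1) ij(1)] False by simp
        next
          case True
          then have "j \<noteq> j'" using \<open>\<not> (i = i' \<and> j = j')\<close> by blast
          have "e j * b * e i = (e j * e j') * b * e i' * e i" using h by (metis mult.assoc)
          then show ?thesis using e_orth[OF ij(2) h(2)] \<open>j \<noteq> j'\<close> by simp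
        qed
        then show ?thesis using span_zero by simp
      qed
    qed
    ultimately have "e j * r * e i \<in> span (Bij i j)"
      using span_induct[of r "B - E" "\<lambda>r. e j * r * e i \<in> span (Bij i j)"] by blast
    then show "z \<in> span (Bij i j)" using r by simp
  qed
next
  have "Bij i j \<subseteq> corner e j i R"
  proof
    fix b assume "b \<in> Bij i j"
    then have "b = e j * b * e i" "b \<in> R" unfolding Bij_def using BE_R by auto
    then show "b \<in> corner e j i R" unfolding corner_def by blast
  qed
  then show "span (Bij i j) \<subseteq> corner e j i R"
    by (rule span_minimal[OF _ corner_subspace[OF subspace_rad]])
qed

end


context qbasis begin

definition Qij :: "nat \<Rightarrow> nat \<Rightarrow> 'q set" where
  "Qij i j = {\<alpha>\<in>Q1. s \<alpha> = i \<and> t \<alpha> = j}"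

lemma subspace_rad_sq: "subspace (rad_sq scale)"
  unfolding rad_sq_def by simp

lemma choose_ij:
  assumes ij: "i \<in> {1..n}" "j \<in> {1..n}"
  shows "\<exists>A h. A \<subseteq> Bij i j \<and> bij_betw h (Qij i j) A \<and>
     corner e j i R \<subseteq> {a + k | a k. a \<in> span A \<and> k \<in> corner e j i (rad_sq scale)} \<and>
     (\<forall>u. (\<Sum>a\<in>A. scale (u a) a) \<in> corner e j i (rad_sq scale) \<longrightarrow> (\<forall>a\<in>A. u a = 0))"
proof -
  let ?C = "corner e j i R" and ?C2 = "corner e j i (rad_sq scale)"
  have sC2: "subspace ?C2" by (rule corner_subspace[OF subspace_rad_sq])
  have C2C: "?C2 \<subseteq> ?C" by (rule corner_mono[OF rad_sq_R])
  obtain K where K: "K \<subseteq> ?C2" "independent K" "?C2 \<subseteq> span K" "card K = dim ?C2"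
    by (rule basis_exists[of ?C2])
  obtain B' where B': "K \<subseteq> B'" "B' \<subseteq> K \<union> Bij i j" "independent B'" "K \<union> Bij i j \<subseteq> span B'"
    using maximal_independent_subset_extend[of K "K \<union> Bij i j"] K(2) by blast
  have fB': "finite B'" by (rule finite_indep[OF B'(3)])
  have fK: "finite K" using finite_subset[OF B'(1) fB'] .
  define A where "A = B' - K"
  have AB: "A \<subseteq> Bij i j" using B'(2) unfolding A_def by blast
  have Cspan: "?C = span (Bij i j)" by (rule C_span[OF ij])
  have CB': "?C \<subseteq> span B'"
    using Cspan span_minimal[of "Bij i j" "span B'"] B'(4) by auto
  have B'C: "B' \<subseteq> ?C" using B'(2) K(1) C2C Cspan span_superset by blast
  have cB': "card B' = dim ?C" by (rule basis_card_eq_dim[OF B'C CB' B'(3)])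
  have cA: "card A = dim ?C - dim ?C2" unfolding A_def using card_Diff_subset[OF fK B'(1)] cB' K(4) by simp
  have fQ: "finite (Qij i j)" unfolding Qij_def using finQ by simp
  have cQ: "card (Qij i j) = card A" using oq ij cA unfolding Qij_def by simp
  have fA: "finite A" unfolding A_def using fB' by simp
  obtain h where h: "bij_betw h (Qij i j) A" using finite_same_card_bij[OF fQ fA cQ] by blast
  have B'AK: "B' = A \<union> K" unfolding A_def using B'(1) by blast
  have dec: "?C \<subseteq> {a + k | a k. a \<in> span A \<and> k \<in> ?C2}"
  proof
    fix x assume "x \<in> ?C"
    then have "x \<in> span (A \<union> K)" using CB' B'AK by blast
    then obtain a k where "x = a + k" "a \<in> span A" "k \<in> span K" unfolding span_Un by blast
    moreover have "span K \<subseteq> ?C2" by (rule span_minimal[OF K(1) sC2])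
    ultimately show "x \<in> {a + k | a k. a \<in> span A \<and> k \<in> ?C2}" by blast
  qed
  have ind: "\<forall>a\<in>A. u a = 0" if u: "(\<Sum>a\<in>A. scale (u a) a) \<in> ?C2" for u
  proof -
    have "(\<Sum>a\<in>A. scale (u a) a) \<in> span K" using u K(3) by blast
    then obtain w where w: "(\<Sum>a\<in>A. scale (u a) a) = (\<Sum>v\<in>K. scale (w v) v)"
      using span_finite[OF fK] by blast
    define U where "U v = (if v \<in> A then u v else - w v)" for v
    have dis: "A \<inter> K = {}" unfolding A_def by blast
    have "(\<Sum>v\<in>B'. scale (U v) v) = (\<Sum>v\<in>A. scale (U v) v) + (\<Sum>v\<in>K. scale (U v) v)"
      unfolding B'AK by (rule sum.union_disjoint[OF fA fK dis])
    also have "(\<Sum>v\<in>A. scale (U v) v) = (\<Sum>a\<in>A. scale (u a) a)" unfolding U_def by simp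
    also have "(\<Sum>v\<in>K. scale (U v) v) = - (\<Sum>v\<in>K. scale (w v) v)"
      unfolding U_def using dis by (auto simp: sum_negf[symmetric] intro!: sum.cong)
    finally have "(\<Sum>v\<in>B'. scale (U v) v) = 0" using w by simp
    then have "\<forall>v\<in>B'. U v = 0" using independentD[OF B'(3) fB' subset_refl] by blast
    show ?thesis
    proof
      fix a assume a: "a \<in> A"
      then have "U a = 0" using \<open>\<forall>v\<in>B'. U v = 0\<close> unfolding B'AK by blast
      then show "u a = 0" using a unfolding U_def by simp
    qed
  qed
  show ?thesis using AB h dec ind by blast
qed

lemma exists_phi:
  "\<exists>\<phi>. (\<forall>\<alpha>\<in>Q1. \<phi> \<alpha> \<in> B - E \<and> \<phi> \<alpha> = e (t \<alpha>) * \<phi> \<alpha> * e (s \<alpha>)) \<and>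
     R \<subseteq> {a + k | a k. a \<in> span (\<phi> ` Q1) \<and> k \<in> rad_sq scale} \<and>
     (\<forall>i\<in>{1..n}. \<forall>j\<in>{1..n}. \<forall>u. (\<Sum>\<alpha>\<in>Qij i j. scale (u \<alpha>) (\<phi> \<alpha>)) \<in> corner e j i (rad_sq scale)
         \<longrightarrow> (\<forall>\<alpha>\<in>Qij i j. u \<alpha> = 0))"
proof -
  define P where "P i j A h \<longleftrightarrow> A \<subseteq> Bij i j \<and> bij_betw h (Qij i j) A \<and>
     corner e j i R \<subseteq> {a + k | a k. a \<in> span A \<and> k \<in> corner e j i (rad_sq scale)} \<and>
     (\<forall>u. (\<Sum>a\<in>A. scale (u a) a) \<in> corner e j i (rad_sq scale) \<longrightarrow> (\<forall>a\<in>A. u a = 0))"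
     for i j A and h :: "'q \<Rightarrow> 'a"
  have "\<forall>ij. \<exists>Ah. fst ij \<in> {1..n} \<and> snd ij \<in> {1..n} \<longrightarrow> P (fst ij) (snd ij) (fst Ah) (snd Ah)"
  proof
    fix ij :: "nat \<times> nat"
    show "\<exists>Ah. fst ij \<in> {1..n} \<and> snd ij \<in> {1..n} \<longrightarrow> P (fst ij) (snd ij) (fst Ah) (snd Ah)"
    proof (cases "fst ij \<in> {1..n} \<and> snd ij \<in> {1..n}")
      case True
      have "\<exists>A h. P (fst ij) (snd ij) A h" unfolding P_def by (rule choose_ij) (use True in auto)
      then obtain A h where "P (fst ij) (snd ij) A h" by blast
      then show ?thesis by (intro exI[of _ "(A, h)"]) simp
    next
      case False
      then show ?thesis by blast
    qed
  qed
  from choice[OF this] obtain F where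
    F: "\<forall>ij. fst ij \<in> {1..n} \<and> snd ij \<in> {1..n} \<longrightarrow> P (fst ij) (snd ij) (fst (F ij)) (snd (F ij))" ..
  define AA where "AA i j = fst (F (i, j))" for i j
  define hh where "hh i j = snd (F (i, j))" for i j
  have P: "AA i j \<subseteq> Bij i j \<and> bij_betw (hh i j) (Qij i j) (AA i j) \<and>
     corner e j i R \<subseteq> {a + k | a k. a \<in> span (AA i j) \<and> k \<in> corner e j i (rad_sq scale)} \<and>
     (\<forall>u. (\<Sum>a\<in>AA i j. scale (u a) a) \<in> corner e j i (rad_sq scale) \<longrightarrow> (\<forall>a\<in>AA i j. u a = 0))"
    if "i \<in> {1..n}" "j \<in> {1..n}" for i j
  proof -
    have "P i j (AA i j) (hh i j)" using F that unfolding AA_def hh_def by (metis fst_conv snd_conv)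
    then show ?thesis unfolding P_def .
  qed
  have PA: "AA i j \<subseteq> Bij i j" if ij: "i \<in> {1..n}" "j \<in> {1..n}" for i j
    using P[OF ij] by (rule conjunct1)
  have Pb: "bij_betw (hh i j) (Qij i j) (AA i j)" if ij: "i \<in> {1..n}" "j \<in> {1..n}" for i j
    using P[OF ij] by (rule conjunct1[OF conjunct2])
  have Pc: "corner e j i R \<subseteq> {a + k | a k. a \<in> span (AA i j) \<and> k \<in> corner e j i (rad_sq scale)}"
    if ij: "i \<in> {1..n}" "j \<in> {1..n}" for i j
    using P[OF ij] by (rule conjunct1[OF conjunct2[OF conjunct2]])
  have Pd: "\<forall>u. (\<Sum>a\<in>AA i j. scale (u a) a) \<in> corner e j i (rad_sq scale) \<longrightarrow> (\<forall>a\<in>AA i j. u a = 0)"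
    if ij: "i \<in> {1..n}" "j \<in> {1..n}" for i j
    using P[OF ij] by (rule conjunct2[OF conjunct2[OF conjunct2]])
  define \<phi> where "\<phi> \<alpha> = hh (s \<alpha>) (t \<alpha>) \<alpha>" for \<alpha>
  have inQ: "\<alpha> \<in> Qij (s \<alpha>) (t \<alpha>)" if "\<alpha> \<in> Q1" for \<alpha> unfolding Qij_def using that by simp
  have phiA: "\<phi> \<alpha> \<in> AA (s \<alpha>) (t \<alpha>)" if a: "\<alpha> \<in> Q1" for \<alpha>
    using bij_betw_apply[OF Pb inQ[OF a]] ends a unfolding \<phi>_def by blast
  have P1: "\<forall>\<alpha>\<in>Q1. \<phi> \<alpha> \<in> B - E \<and> \<phi> \<alpha> = e (t \<alpha>) * \<phi> \<alpha> * e (s \<alpha>)"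
  proof
    fix \<alpha> assume a: "\<alpha> \<in> Q1"
    then have "\<phi> \<alpha> \<in> Bij (s \<alpha>) (t \<alpha>)" using phiA[OF a] PA ends by blast
    then show "\<phi> \<alpha> \<in> B - E \<and> \<phi> \<alpha> = e (t \<alpha>) * \<phi> \<alpha> * e (s \<alpha>)" unfolding Bij_def by blast
  qed
  have AAsub: "AA i j \<subseteq> \<phi> ` Q1" if ij: "i \<in> {1..n}" "j \<in> {1..n}" for i j
  proof
    fix a assume "a \<in> AA i j"
    then have "a \<in> hh i j ` Qij i j" using bij_betw_imp_surj_on[OF Pb[OF ij]] by simp
    then obtain \<alpha> where "\<alpha> \<in> Qij i j" "a = hh i j \<alpha>" by blast
    then show "a \<in> \<phi> ` Q1" unfolding Qij_def \<phi>_def by auto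
  qed
  let ?PS = "{a + k | a k. a \<in> span (\<phi> ` Q1) \<and> k \<in> rad_sq scale}"
  have sPS: "subspace ?PS" by (rule subspace_sums[OF subspace_span subspace_rad_sq])
  have P2: "R \<subseteq> ?PS"
  proof
    fix w assume w: "w \<in> R"
    have "w = (\<Sum>j\<in>{1..n}. e j) * w * (\<Sum>i\<in>{1..n}. e i)" using e_sum by simp
    also have "\<dots> = (\<Sum>i\<in>{1..n}. \<Sum>j\<in>{1..n}. e j * w * e i)"
      by (simp add: sum_distrib_left sum_distrib_right)
    finally have weq: "w = (\<Sum>i\<in>{1..n}. \<Sum>j\<in>{1..n}. e j * w * e i)" .
    have "e j * w * e i \<in> ?PS" if ij: "i \<in> {1..n}" "j \<in> {1..n}" for i j
    proof -
      have "e j * w * e i \<in> corner e j i R" using w unfolding corner_def by blast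
      then obtain a k where ak: "e j * w * e i = a + k" "a \<in> span (AA i j)" "k \<in> corner e j i (rad_sq scale)"
        using Pc[OF ij] by blast
      have "a \<in> span (\<phi> ` Q1)" using ak(2) span_mono[OF AAsub[OF ij]] by blast
      moreover have "k \<in> rad_sq scale" using ak(3) corner_rad_sq by blast
      ultimately show ?thesis using ak(1) by blast
    qed
    then have "(\<Sum>i\<in>{1..n}. \<Sum>j\<in>{1..n}. e j * w * e i) \<in> ?PS"
      by (intro subspace_sum[OF sPS] subspace_sum[OF sPS]) auto
    then show "w \<in> ?PS" using weq by simp
  qed
  have P3: "\<forall>\<alpha>\<in>Qij i j. u \<alpha> = 0"
    if ij: "i \<in> {1..n}" "j \<in> {1..n}" and u: "(\<Sum>\<alpha>\<in>Qij i j. scale (u \<alpha>) (\<phi> \<alpha>)) \<in> corner e j i (rad_sq scale)" for i j u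
  proof -
    have bij: "bij_betw (hh i j) (Qij i j) (AA i j)" using Pb[OF ij] .
    let ?inv = "inv_into (Qij i j) (hh i j)"
    have "(\<Sum>\<alpha>\<in>Qij i j. scale (u \<alpha>) (\<phi> \<alpha>)) = (\<Sum>\<alpha>\<in>Qij i j. scale (u (?inv (hh i j \<alpha>))) (hh i j \<alpha>))"
    proof (rule sum.cong)
      fix \<alpha> assume a: "\<alpha> \<in> Qij i j"
      then have "?inv (hh i j \<alpha>) = \<alpha>" using bij bij_betw_inv_into_left by fastforce
      moreover have "\<phi> \<alpha> = hh i j \<alpha>" using a unfolding Qij_def \<phi>_def by simp
      ultimately show "scale (u \<alpha>) (\<phi> \<alpha>) = scale (u (?inv (hh i j \<alpha>))) (hh i j \<alpha>)" by simp
    qed simp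
    also have "\<dots> = (\<Sum>a\<in>AA i j. scale (u (?inv a)) a)"
      by (rule sum.reindex_bij_betw[OF bij, of "\<lambda>a. scale (u (?inv a)) a"])
    finally have "(\<Sum>a\<in>AA i j. scale (u (?inv a)) a) \<in> corner e j i (rad_sq scale)" using u by simp
    then have z: "\<forall>a\<in>AA i j. u (?inv a) = 0" using spec[OF Pd[OF ij], of "\<lambda>a. u (?inv a)"] by (rule mp[rotated])
    show ?thesis
    proof
      fix \<alpha> assume a: "\<alpha> \<in> Qij i j"
      then have "hh i j \<alpha> \<in> AA i j" "?inv (hh i j \<alpha>) = \<alpha>" using bij bij_betw_inv_into_left
        unfolding bij_betw_def by fastforce+
      then show "u \<alpha> = 0" using z by metis
    qed
  qed
  show ?thesis using P1 P2 P3 by blast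
qed

end


context falg begin
lemma sc_mid: "a * scale c x * b = scale c (a * x * b)"
  by (metis sc_l sc_r)
lemma subspace_rad_sqq: "subspace (rad_sq scale)"
  unfolding rad_sq_def by simp
lemma radpow_anti: "k \<le> m \<Longrightarrow> radpow m \<subseteq> radpow k"
proof (induction m)
  case (Suc m)
  then show ?case using radpow_Suc_sub[of m] by (metis le_SucE order_refl subset_trans)
qed simp
end

context qalg begin

lemma coef_E:
  assumes "(\<Sum>i\<in>{1..n}. scale (c i) (e i)) \<in> R" "k \<in> {1..n}" shows "c k = 0"
proof (rule ccontr)
  assume nz: "c k \<noteq> 0"
  have "(\<Sum>i\<in>{1..n}. scale (c i) (e i)) * e k = (\<Sum>i\<in>{1..n}. scale (c i) (e i * e k))"
    by (simp add: sum_distrib_right sc_l)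
  also have "\<dots> = (\<Sum>i\<in>{1..n}. if i = k then scale (c k) (e k) else 0)"
    by (rule sum.cong) (use assms(2) e_mult in auto)
  also have "\<dots> = scale (c k) (e k)" using assms(2) by (simp add: sum.delta)
  finally have "scale (c k) (e k) \<in> R" using rad_mult assms(1) by metis
  then have "scale (inverse (c k)) (scale (c k) (e k)) \<in> R" by (rule rad_scale)
  then have "e k \<in> R" using nz by simp
  then show False using e_notR assms(2) by blast
qed

lemma path_len1: "path_from Q1 s t x [a] y \<longleftrightarrow> a \<in> Q1 \<and> s a = x \<and> t a = y"
  by auto

lemma pv_len1: "path_val e \<phi> x [a] = \<phi> a"
  unfolding path_val_def by simp

lemma pv_R:
  assumes c: "corner_ok \<phi>" and phiR: "\<forall>\<alpha>\<in>Q1. \<phi> \<alpha> \<in> R"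
    and p: "path_from Q1 s t x ps y" and ne: "ps \<noteq> []"
  shows "path_val e \<phi> x ps \<in> R"
proof -
  obtain ps' b where ps: "ps = ps' @ [b]" using ne rev_exhaust by blast
  then have p1: "path_from Q1 s t x ps' (s b)" "b \<in> Q1" using p path_from_snoc by metis+
  have "path_val e \<phi> x ps = \<phi> b * path_val e \<phi> x ps'" using pv_snoc[OF c p1] ps by simp
  then show ?thesis using phiR p1(2) rad_mult by simp
qed

lemma pv_sq:
  assumes c: "corner_ok \<phi>" and phiR: "\<forall>\<alpha>\<in>Q1. \<phi> \<alpha> \<in> R"
    and p: "path_from Q1 s t x ps y" and l: "2 \<le> length ps"
  shows "path_val e \<phi> x ps \<in> rad_sq scale"
proof -
  have ne: "ps \<noteq> []" using l by auto
  obtain ps' b where ps: "ps = ps' @ [b]" using ne rev_exhaust by blast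
  then have p1: "path_from Q1 s t x ps' (s b)" "b \<in> Q1" using p path_from_snoc by metis+
  have ne': "ps' \<noteq> []" using l ps by auto
  have eq: "path_val e \<phi> x ps = \<phi> b * path_val e \<phi> x ps'" using pv_snoc[OF c p1] ps by simp
  have "path_val e \<phi> x ps' \<in> R" by (rule pv_R[OF c phiR p1(1) ne'])
  then show ?thesis unfolding eq rad_sq_def using phiR p1(2) by (blast intro: span_base)
qed

lemma pv_radpow:
  assumes c: "corner_ok \<phi>" and phiR: "\<forall>\<alpha>\<in>Q1. \<phi> \<alpha> \<in> R"
    and p: "path_from Q1 s t x ps y"
  shows "path_val e \<phi> x ps \<in> radpow (length ps)"
  using p
proof (induction ps arbitrary: y rule: rev_induct)
  case Nil then show ?case by simp
next
  case (snoc b ps)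
  then have p1: "path_from Q1 s t x ps (s b)" "b \<in> Q1" using path_from_snoc by metis+
  have eq: "path_val e \<phi> x (ps @ [b]) = \<phi> b * path_val e \<phi> x ps" using pv_snoc[OF c p1] by simp
  show ?case unfolding eq using radpow_left[OF _ snoc.IH[OF p1(1)]] phiR p1(2) by simp
qed

lemma phi_presentation:
  assumes P1: "\<forall>\<alpha>\<in>Q1. \<phi> \<alpha> \<in> R \<and> \<phi> \<alpha> = e (t \<alpha>) * \<phi> \<alpha> * e (s \<alpha>)"
    and P2: "R \<subseteq> {a + k | a k. a \<in> span (\<phi> ` Q1) \<and> k \<in> rad_sq scale}"
    and P3: "\<forall>i\<in>{1..n}. \<forall>j\<in>{1..n}. \<forall>u. (\<Sum>\<alpha>\<in>{\<alpha>\<in>Q1. s \<alpha> = i \<and> t \<alpha> = j}. scale (u \<alpha>) (\<phi> \<alpha>)) \<in> corner e j i (rad_sq scale)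
         \<longrightarrow> (\<forall>\<alpha>\<in>{\<alpha>\<in>Q1. s \<alpha> = i \<and> t \<alpha> = j}. u \<alpha> = 0)"
    and UB: "UNIV \<subseteq> span (e ` {1..n} \<union> R)"
  shows "presentation n Q1 s t scale e \<phi>"
proof -
  have c: "corner_ok \<phi>" using P1 unfolding corner_ok_def by blast
  have phiR: "\<forall>\<alpha>\<in>Q1. \<phi> \<alpha> \<in> R" using P1 by blast
  obtain N0 where N0: "N0 \<ge> 1" "radpow N0 = {0}" using radpow_nilpotent by blast
  define J where "J = span (pvs \<phi> 1)"
  have JR: "J \<subseteq> R"
    unfolding J_def
  proof (rule span_minimal[OF _ subspace_rad])
    show "pvs \<phi> 1 \<subseteq> R"
    proof
      fix v assume "v \<in> pvs \<phi> 1"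
      then obtain x ps where h: "v = path_val e \<phi> x ps" "is_path n Q1 s t (x, ps)" "1 \<le> length ps"
        unfolding pvs_def by blast
      then obtain y where y: "path_from Q1 s t x ps y" unfolding is_path_def by auto
      have "ps \<noteq> []" using h(3) by auto
      then show "v \<in> R" using pv_R[OF c phiR y] h(1) by simp
    qed
  qed
  have phiJ: "\<phi> ` Q1 \<subseteq> J"
  proof
    fix v assume "v \<in> \<phi> ` Q1"
    then obtain a where a: "a \<in> Q1" "v = \<phi> a" by blast
    then have "v = path_val e \<phi> (s a) [a]" "is_path n Q1 s t (s a, [a])"
      using ends unfolding is_path_def by (auto simp: pv_len1)
    then have "v \<in> pvs \<phi> 1" unfolding pvs_def by force
    then show "v \<in> J" unfolding J_def by (rule span_base)
  qed
  have JJ: "p1 * p2 \<in> J" if "p1 \<in> J" "p2 \<in> J" for p1 p2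
  proof -
    have "p1 * p2 \<in> span (pvs \<phi> (1 + 1))" using span_pvs_mult[OF c] that unfolding J_def by blast
    moreover have "span (pvs \<phi> (1 + 1)) \<subseteq> J" unfolding J_def by (rule span_mono[OF pvs_mono]) simp
    ultimately show ?thesis by blast
  qed
  define PL where "PL k = {a + q | a q. a \<in> J \<and> q \<in> radpow k}" for k
  have sPL: "subspace (PL k)" for k unfolding PL_def J_def by (rule subspace_sums[OF subspace_span subspace_radpow])
  have RPL: "R \<subseteq> PL (Suc k)" for k
  proof (induction k)
    case 0
    show ?case
    proof
      fix x assume "x \<in> R"
      then have "x = 0 + x" "0 \<in> J" "x \<in> radpow 1" using radpow_1 span_zero unfolding J_def by auto
      then show "x \<in> PL (Suc 0)" unfolding PL_def by force
    qed
  next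
    case (Suc k)
    have gen: "y * z \<in> PL (Suc (Suc k))" if yz: "y \<in> R" "z \<in> R" for y z
    proof -
      obtain p1 q1 where 1: "y = p1 + q1" "p1 \<in> J" "q1 \<in> radpow (Suc k)" using Suc yz(1) unfolding PL_def by blast
      obtain p2 q2 where 2: "z = p2 + q2" "p2 \<in> J" "q2 \<in> radpow (Suc k)" using Suc yz(2) unfolding PL_def by blast
      have "y * z = p1 * p2 + (p1 * q2 + q1 * p2 + q1 * q2)" using 1 2 by (simp add: algebra_simps)
      moreover have "p1 * p2 \<in> J" using JJ 1 2 by blast
      moreover have "p1 * q2 \<in> radpow (Suc (Suc k))" using radpow_left 1 2 JR by blast
      moreover have "q1 * p2 \<in> radpow (Suc (Suc k))" using radpow_right 1 2 JR by blast
      moreover have "q1 * q2 \<in> radpow (Suc (Suc k))"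
      proof -
        have "q2 \<in> R" using radpow_sub_R[of "Suc k"] 2(3) by auto
        then show ?thesis by (rule radpow_right[OF 1(3)])
      qed
      ultimately show ?thesis unfolding PL_def
        using subspace_add[OF subspace_radpow] by blast
    qed
    have "rad_sq scale \<subseteq> PL (Suc (Suc k))"
      unfolding rad_sq_def by (rule span_minimal[OF _ sPL]) (use gen in blast)
    show ?case
    proof
      fix x assume "x \<in> R"
      then obtain a q where aq: "x = a + q" "a \<in> span (\<phi> ` Q1)" "q \<in> rad_sq scale" using P2 by blast
      have "a \<in> J" using aq(2) span_minimal[OF phiJ] unfolding J_def by blast
      moreover have "a = a + 0" by simp
      moreover have "0 \<in> radpow (Suc (Suc k))" by (rule subspace_0[OF subspace_radpow])
      ultimately have "a \<in> PL (Suc (Suc k))" unfolding PL_def by blast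
      moreover have "q \<in> PL (Suc (Suc k))" using aq(3) \<open>rad_sq scale \<subseteq> PL (Suc (Suc k))\<close> by blast
      ultimately show "x \<in> PL (Suc (Suc k))" using aq(1) subspace_add[OF sPL] by blast
    qed
  qed
  have RJ: "R \<subseteq> J"
  proof
    fix x assume "x \<in> R"
    moreover have "Suc (N0 - 1) = N0" using N0(1) by simp
    ultimately have "x \<in> PL N0" using RPL[of "N0 - 1"] by (metis subsetD)
    then show "x \<in> J" unfolding PL_def using N0(2) by auto
  qed
  have sp: "span (pvs \<phi> 0) = UNIV"
  proof -
    have "e ` {1..n} \<union> R \<subseteq> span (pvs \<phi> 0)"
    proof -
      have "e ` {1..n} \<subseteq> span (pvs \<phi> 0)" using pvs_0_E span_superset by blast
      moreover have "J \<subseteq> span (pvs \<phi> 0)" unfolding J_def by (rule span_mono[OF pvs_mono]) simp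
      ultimately show ?thesis using RJ by blast
    qed
    then have "span (e ` {1..n} \<union> R) \<subseteq> span (pvs \<phi> 0)" by (rule span_minimal) simp
    then show ?thesis using UB by blast
  qed
  have surj: "\<forall>a. \<exists>\<rho>. pa_elem n Q1 s t \<rho> \<and> pa_map scale e \<phi> \<rho> = a"
  proof
    fix a :: 'a
    have "a \<in> pa_range \<phi>" using span_pvs_pa_range sp by blast
    then show "\<exists>\<rho>. pa_elem n Q1 s t \<rho> \<and> pa_map scale e \<phi> \<rho> = a" unfolding pa_range_def by blast
  qed
  have long: "arrow_ideal_pow n Q1 s t (N0 + 2) \<subseteq> pa_kernel n Q1 s t scale e \<phi>"
  proof
    fix \<rho> :: "nat \<times> 'q list \<Rightarrow> 'k" assume r: "\<rho> \<in> arrow_ideal_pow n Q1 s t (N0 + 2)"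
    have "pa_map scale e \<phi> \<rho> = 0"
      unfolding pa_map_def
    proof (rule sum.neutral, rule ballI)
      fix p assume "p \<in> {p. \<rho> p \<noteq> 0}"
      then have "\<rho> p \<noteq> 0" by simp
      then have p: "is_path n Q1 s t p" "N0 + 2 \<le> length (snd p)" using r unfolding arrow_ideal_pow_def pa_elem_def by blast+
      then obtain y where y: "path_from Q1 s t (fst p) (snd p) y" unfolding is_path_def by blast
      have "path_val e \<phi> (fst p) (snd p) \<in> radpow N0"
        using pv_radpow[OF c phiR y] radpow_anti[of N0 "length (snd p)"] p(2) by auto
      then show "scale (\<rho> p) (path_val e \<phi> (fst p) (snd p)) = 0" using N0(2) by simp
    qed
    then show "\<rho> \<in> pa_kernel n Q1 s t scale e \<phi>" using r unfolding pa_kernel_def arrow_ideal_pow_def by blast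
  qed
  have short: "pa_kernel n Q1 s t scale e \<phi> \<subseteq> arrow_ideal_pow n Q1 s t 2"
  proof
    fix \<rho> assume r: "\<rho> \<in> pa_kernel n Q1 s t scale e \<phi>"
    then have pe: "pa_elem n Q1 s t \<rho>" and z: "pa_map scale e \<phi> \<rho> = 0" unfolding pa_kernel_def by auto
    let ?F = "{p. \<rho> p \<noteq> 0}"
    have fF: "finite ?F" using pe unfolding pa_elem_def by blast
    have ipF: "is_path n Q1 s t p" if "p \<in> ?F" for p using pe that unfolding pa_elem_def by blast
    define G0 where "G0 = (\<lambda>k. (k, [] :: 'q list)) ` {1..n}"
    define G1 where "G1 = (\<lambda>a. (s a, [a])) ` Q1"
    define H2 where "H2 = {p\<in>?F. 2 \<le> length (snd p)}"
    define g where "g p = scale (\<rho> p) (path_val e \<phi> (fst p) (snd p))" for p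
    have fG0: "finite G0" unfolding G0_def by simp
    have fG1: "finite G1" unfolding G1_def using finQ by simp
    have fH2: "finite H2" unfolding H2_def using fF by simp
    have sub: "?F \<subseteq> G0 \<union> G1 \<union> H2"
    proof
      fix p assume pF: "p \<in> ?F"
      obtain x ps where p: "p = (x, ps)" by (cases p)
      obtain y where y: "x \<in> {1..n}" "path_from Q1 s t x ps y" using ipF[OF pF] unfolding p is_path_def by auto
      show "p \<in> G0 \<union> G1 \<union> H2"
      proof (cases ps)
        case Nil then show ?thesis using y unfolding p G0_def by auto
      next
        case (Cons a ps')
        show ?thesis
        proof (cases ps')
          case Nil
          then have "a \<in> Q1" "s a = x" using y Cons by auto
          then show ?thesis unfolding p G1_def using Cons Nil by auto
        next
          case (Cons b ps'')
          then show ?thesis using pF \<open>ps = a # ps'\<close> unfolding p H2_def by auto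
        qed
      qed
    qed
    have d01: "G0 \<inter> G1 = {}" unfolding G0_def G1_def by auto
    have d2: "(G0 \<union> G1) \<inter> H2 = {}" unfolding G0_def G1_def H2_def by auto
    have "0 = (\<Sum>p\<in>G0 \<union> G1 \<union> H2. g p)"
      using z pa_map_superset[of "G0 \<union> G1 \<union> H2" \<rho> \<phi>] fG0 fG1 fH2 sub unfolding g_def by simp
    also have "\<dots> = (\<Sum>p\<in>G0. g p) + (\<Sum>p\<in>G1. g p) + (\<Sum>p\<in>H2. g p)"
      by (simp add: sum.union_disjoint[OF _ _ d2] sum.union_disjoint[OF fG0 fG1 d01] fG0 fG1 fH2)
    finally have sum0: "(\<Sum>p\<in>G0. g p) + (\<Sum>p\<in>G1. g p) + (\<Sum>p\<in>H2. g p) = 0" by simp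
    have T0: "(\<Sum>p\<in>G0. g p) = (\<Sum>k\<in>{1..n}. scale (\<rho> (k, [])) (e k))"
      unfolding G0_def g_def by (subst sum.reindex) (auto simp: inj_on_def path_val_def)
    have injG1: "inj_on (\<lambda>a. (s a, [a])) Q1" by (auto simp: inj_on_def)
    have T1: "(\<Sum>p\<in>G1. g p) = (\<Sum>a\<in>Q1. scale (\<rho> (s a, [a])) (\<phi> a))"
      unfolding G1_def g_def by (subst sum.reindex[OF injG1]) (auto simp: pv_len1)
    have T2: "(\<Sum>p\<in>H2. g p) \<in> rad_sq scale"
    proof (rule subspace_sum[OF subspace_rad_sqq])
      fix p assume "p \<in> H2"
      then have pF: "p \<in> ?F" and l: "2 \<le> length (snd p)" unfolding H2_def by auto
      obtain y where y: "path_from Q1 s t (fst p) (snd p) y" using ipF[OF pF] unfolding is_path_def by blast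
      show "g p \<in> rad_sq scale" unfolding g_def
        by (rule subspace_scale[OF subspace_rad_sqq pv_sq[OF c phiR y l]])
    qed
    have T1R: "(\<Sum>a\<in>Q1. scale (\<rho> (s a, [a])) (\<phi> a)) \<in> R"
      by (rule rad_sum) (use phiR rad_scale in blast)
    have T0R: "(\<Sum>k\<in>{1..n}. scale (\<rho> (k, [])) (e k)) \<in> R"
    proof -
      have "(\<Sum>k\<in>{1..n}. scale (\<rho> (k, [])) (e k)) = - ((\<Sum>a\<in>Q1. scale (\<rho> (s a, [a])) (\<phi> a)) + (\<Sum>p\<in>H2. g p))"
      proof -
        have "(\<Sum>k\<in>{1..n}. scale (\<rho> (k, [])) (e k)) + ((\<Sum>a\<in>Q1. scale (\<rho> (s a, [a])) (\<phi> a)) + (\<Sum>p\<in>H2. g p)) = 0"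
          using sum0 T0 T1 by (simp add: add.assoc)
        then show ?thesis by (simp only: eq_neg_iff_add_eq_0)
      qed
      moreover have H2R: "(\<Sum>p\<in>H2. g p) \<in> R" using T2 rad_sq_R by blast
      ultimately show ?thesis using rad_neg[OF rad_add[OF T1R H2R]] by simp
    qed
    have c0: "\<rho> (k, []) = 0" if "k \<in> {1..n}" for k using coef_E[OF T0R that] .
    then have "(\<Sum>k\<in>{1..n}. scale (\<rho> (k, [])) (e k)) = 0" by simp
    then have T1sq: "(\<Sum>a\<in>Q1. scale (\<rho> (s a, [a])) (\<phi> a)) \<in> rad_sq scale"
    proof -
      assume "(\<Sum>k\<in>{1..n}. scale (\<rho> (k, [])) (e k)) = 0"
      then have "(\<Sum>a\<in>Q1. scale (\<rho> (s a, [a])) (\<phi> a)) = - (\<Sum>p\<in>H2. g p)"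
      proof -
        have "(\<Sum>a\<in>Q1. scale (\<rho> (s a, [a])) (\<phi> a)) + (\<Sum>p\<in>H2. g p) = 0"
          using sum0 T0 T1 \<open>(\<Sum>k\<in>{1..n}. scale (\<rho> (k, [])) (e k)) = 0\<close> by simp
        then show ?thesis by (simp only: eq_neg_iff_add_eq_0)
      qed
      then show ?thesis using T2 subspace_neg[OF subspace_rad_sqq] by simp
    qed
    have c1: "\<rho> (s a0, [a0]) = 0" if a0: "a0 \<in> Q1" for a0
    proof -
      define i where "i = s a0"
      define j where "j = t a0"
      have ij: "i \<in> {1..n}" "j \<in> {1..n}" using ends a0 unfolding i_def j_def by auto
      let ?Q = "{\<alpha>\<in>Q1. s \<alpha> = i \<and> t \<alpha> = j}"
      have "e j * (\<Sum>a\<in>Q1. scale (\<rho> (s a, [a])) (\<phi> a)) * e i \<in> corner e j i (rad_sq scale)"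
        using T1sq unfolding corner_def by blast
      moreover have "e j * (\<Sum>a\<in>Q1. scale (\<rho> (s a, [a])) (\<phi> a)) * e i = (\<Sum>a\<in>Q1. if a \<in> ?Q then scale (\<rho> (s a, [a])) (\<phi> a) else 0)"
      proof -
        have "e j * (\<Sum>a\<in>Q1. scale (\<rho> (s a, [a])) (\<phi> a)) * e i = (\<Sum>a\<in>Q1. scale (\<rho> (s a, [a])) (e j * \<phi> a * e i))"
          by (simp add: sum_distrib_left sum_distrib_right sc_mid)
        also have "\<dots> = (\<Sum>a\<in>Q1. if a \<in> ?Q then scale (\<rho> (s a, [a])) (\<phi> a) else 0)"
        proof (rule sum.cong[OF HOL.refl])
          fix a assume a: "a \<in> Q1"
          have pa: "\<phi> a = e (t a) * \<phi> a * e (s a)" using P1 a by blast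
          have ea: "s a \<in> {1..n}" "t a \<in> {1..n}" using ends a by auto
          show "scale (\<rho> (s a, [a])) (e j * \<phi> a * e i) = (if a \<in> ?Q then scale (\<rho> (s a, [a])) (\<phi> a) else 0)"
          proof (cases "a \<in> ?Q")
            case True
            then have "e j * \<phi> a * e i = \<phi> a" using pa e_idem ij by (metis (mono_tags, lifting) mem_Collect_eq mult.assoc)
            then show ?thesis using True by simp
          next
            case False
            then have "s a \<noteq> i \<or> t a \<noteq> j" using a by auto
            then have "e j * \<phi> a * e i = 0"
            proof
              assume "s a \<noteq> i"
              have "e j * \<phi> a * e i = e j * e (t a) * \<phi> a * (e (s a) * e i)" using pa by (metis mult.assoc)
              then show ?thesis using e_orth[OF ea(1) ij(1) \<open>s a \<noteq> i\<close>] by simp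
            next
              assume "t a \<noteq> j"
              have "e j * \<phi> a * e i = (e j * e (t a)) * \<phi> a * e (s a) * e i" using pa by (metis mult.assoc)
              then show ?thesis using e_orth[OF ij(2) ea(2)] \<open>t a \<noteq> j\<close> by simp
            qed
            moreover have "(a \<in> ?Q) = False" using False by blast
            ultimately show ?thesis by (simp only: if_False scale_zero_right)
          qed
        qed
        finally show ?thesis .
      qed
      moreover have "(\<Sum>a\<in>Q1. if a \<in> ?Q then scale (\<rho> (s a, [a])) (\<phi> a) else 0) = (\<Sum>a\<in>?Q. scale (\<rho> (s a, [a])) (\<phi> a))"
        using finQ by (simp add: sum.If_cases Int_def)
      ultimately have "(\<Sum>a\<in>?Q. scale ((\<lambda>a. \<rho> (s a, [a])) a) (\<phi> a)) \<in> corner e j i (rad_sq scale)" by simp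
      then have "\<forall>a\<in>?Q. \<rho> (s a, [a]) = 0"
        using spec[OF bspec[OF bspec[OF P3 ij(1)] ij(2)], of "\<lambda>a. \<rho> (s a, [a])"] by (rule mp[rotated])
      moreover have "a0 \<in> ?Q" using a0 unfolding i_def j_def by simp
      ultimately show ?thesis by blast
    qed
    have "\<forall>p. \<rho> p \<noteq> 0 \<longrightarrow> 2 \<le> length (snd p)"
    proof (intro allI impI)
      fix p assume pF: "\<rho> p \<noteq> 0"
      then have "p \<in> G0 \<union> G1 \<union> H2" using sub by blast
      moreover have "p \<notin> G0" using c0 pF unfolding G0_def by auto
      moreover have "p \<notin> G1" using c1 pF unfolding G1_def by auto
      ultimately show "2 \<le> length (snd p)" unfolding H2_def by blast
    qed
    then show "\<rho> \<in> arrow_ideal_pow n Q1 s t 2" using pe unfolding arrow_ideal_pow_def by blast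
  qed
  show ?thesis unfolding presentation_def
    using P1 surj long short by (intro conjI) (blast, blast, intro exI[of _ "N0 + 2"], simp)
qed

end


context falg begin

lemma vandermonde:
  assumes "finite V" "\<And>k. (\<Sum>\<mu>\<in>V. scale (\<mu> ^ k) (w \<mu>)) = 0"
  shows "\<forall>\<mu>\<in>V. w \<mu> = 0"
  using assms
proof (induction V arbitrary: w rule: finite_induct)
  case empty then show ?case by simp
next
  case (insert m V)
  define w' where "w' \<mu> = scale (\<mu> - m) (w \<mu>)" for \<mu>
  have h: "scale (m ^ k) (w m) + (\<Sum>\<mu>\<in>V. scale (\<mu> ^ k) (w \<mu>)) = 0" for k
    using insert.prems[of k] insert.hyps by simp
  have hk: "(\<Sum>\<mu>\<in>V. scale (\<mu> ^ k) (w \<mu>)) = - scale (m ^ k) (w m)" for k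
    using h[of k] by (simp add: eq_neg_iff_add_eq_0 add.commute)
  have w'0: "(\<Sum>\<mu>\<in>V. scale (\<mu> ^ k) (w' \<mu>)) = 0" for k
  proof -
    have trm: "scale (\<mu> ^ k) (scale (\<mu> - m) x) = scale (\<mu> ^ Suc k) x - scale m (scale (\<mu> ^ k) x)" for \<mu> x
    proof -
      have eq: "\<mu> ^ k * (\<mu> - m) = \<mu> ^ Suc k - m * \<mu> ^ k" by (simp add: algebra_simps)
      have "scale (\<mu> ^ k) (scale (\<mu> - m) x) = scale (\<mu> ^ k * (\<mu> - m)) x" by (rule scale_scale)
      also have "\<dots> = scale (\<mu> ^ Suc k - m * \<mu> ^ k) x" by (simp only: eq)
      also have "\<dots> = scale (\<mu> ^ Suc k) x - scale m (scale (\<mu> ^ k) x)" by (simp only: scale_left_diff_distrib scale_scale)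
      finally show ?thesis .
    qed
    have "(\<Sum>\<mu>\<in>V. scale (\<mu> ^ k) (w' \<mu>)) = (\<Sum>\<mu>\<in>V. scale (\<mu> ^ Suc k) (w \<mu>) - scale m (scale (\<mu> ^ k) (w \<mu>)))"
      unfolding w'_def by (simp only: trm)
    also have "\<dots> = (\<Sum>\<mu>\<in>V. scale (\<mu> ^ Suc k) (w \<mu>)) - scale m (\<Sum>\<mu>\<in>V. scale (\<mu> ^ k) (w \<mu>))"
      by (simp only: sum_subtractf scale_sum_right)
    also have "\<dots> = - scale (m ^ Suc k) (w m) - scale m (- scale (m ^ k) (w m))"
      by (simp only: hk)
    also have "\<dots> = 0" by simp
    finally show ?thesis .
  qed
  have "\<forall>\<mu>\<in>V. w' \<mu> = 0" by (rule insert.IH[of w', OF w'0])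
  then have wV: "\<forall>\<mu>\<in>V. w \<mu> = 0" unfolding w'_def using insert.hyps by auto
  have "w m = 0" using h[of 0] wV by simp
  then show ?case using wV by simp
qed

lemma additive_sum:
  fixes D :: "'a \<Rightarrow> 'a" and g :: "'b \<Rightarrow> 'a"
  assumes add: "\<And>a b. D (a + b) = D a + D b"
  shows "D (sum g F) = (\<Sum>p\<in>F. D (g p))"
proof -
  have "D 0 = D 0 + D 0" using add[of 0 0] by simp
  then have D0: "D 0 = 0" by simp
  show ?thesis
  proof (cases "finite F")
    case True
    from True show ?thesis
    proof (induction F rule: finite_induct)
      case empty then show ?case using D0 by simp
    next
      case (insert x F)
      have "D (sum g (insert x F)) = D (g x + sum g F)" using insert.hyps by simp
      also have "\<dots> = D (g x) + D (sum g F)" by (rule add)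
      finally show ?case using insert by simp
    qed
  next
    case False
    then show ?thesis using D0 by simp
  qed
qed

lemma der_iter:
  fixes d :: "'a \<Rightarrow> 'a"
  assumes add: "\<And>a b. d (a + b) = d a + d b" and sc: "\<And>c a. d (scale c a) = scale c (d a)"
  shows "(d ^^ k) (a + b) = (d ^^ k) a + (d ^^ k) b" "(d ^^ k) (scale c a) = scale c ((d ^^ k) a)"
proof -
  show "(d ^^ k) (a + b) = (d ^^ k) a + (d ^^ k) b" by (induction k) (simp_all add: add)
  show "(d ^^ k) (scale c a) = scale c ((d ^^ k) a)" by (induction k) (simp_all add: sc)
qed

lemma der_iter_eig:
  fixes d :: "'a \<Rightarrow> 'a"
  assumes sc: "\<And>c a. d (scale c a) = scale c (d a)" and ev: "d v = scale \<mu> v"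
  shows "(d ^^ k) v = scale (\<mu> ^ k) v"
  by (induction k) (simp_all add: sc ev mult.commute)

end

context qalg begin

lemma Der0_D:
  assumes "d \<in> Der0 scale n e"
  shows "\<And>a b. d (a + b) = d a + d b" "\<And>c a. d (scale c a) = scale c (d a)"
    "\<And>a b. d (a * b) = d a * b + a * d b" "\<And>i. i \<in> {1..n} \<Longrightarrow> d (e i) = 0"
  using assms unfolding Der0_def by auto

definition Lam :: "('q \<Rightarrow> 'k) \<Rightarrow> 'q list \<Rightarrow> 'k" where
  "Lam lam ps = sum_list (map lam ps)"

lemma d_pv:
  assumes d: "d \<in> Der0 scale n e" and c: "corner_ok \<phi>"
    and lam: "\<forall>\<alpha>\<in>Q1. d (\<phi> \<alpha>) = scale (lam \<alpha>) (\<phi> \<alpha>)"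
    and x: "x \<in> {1..n}" and p: "path_from Q1 s t x ps y"
  shows "d (path_val e \<phi> x ps) = scale (Lam lam ps) (path_val e \<phi> x ps)"
  using p
proof (induction ps arbitrary: y rule: rev_induct)
  case Nil
  then show ?case using Der0_D(4)[OF d x] unfolding path_val_def Lam_def by simp
next
  case (snoc b ps)
  then have p1: "path_from Q1 s t x ps (s b)" "b \<in> Q1" using path_from_snoc by metis+
  have eq: "path_val e \<phi> x (ps @ [b]) = \<phi> b * path_val e \<phi> x ps" using pv_snoc[OF c p1] by simp
  have "d (\<phi> b * path_val e \<phi> x ps) = d (\<phi> b) * path_val e \<phi> x ps + \<phi> b * d (path_val e \<phi> x ps)"
    by (rule Der0_D(3)[OF d])
  also have "\<dots> = scale (lam b) (\<phi> b) * path_val e \<phi> x ps + \<phi> b * scale (Lam lam ps) (path_val e \<phi> x ps)"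
    using lam p1(2) snoc.IH[OF p1(1)] by simp
  also have "\<dots> = scale (Lam lam ps + lam b) (\<phi> b * path_val e \<phi> x ps)"
    by (simp add: sc_l[symmetric] sc_r[symmetric] scale_left_distrib add.commute)
  finally show ?case unfolding eq Lam_def by simp
qed

lemma minrel_weight:
  assumes d: "d \<in> Der0 scale n e" and c: "corner_ok \<phi>"
    and lam: "\<forall>\<alpha>\<in>Q1. d (\<phi> \<alpha>) = scale (lam \<alpha>) (\<phi> \<alpha>)"
    and mr: "minimal_relation n Q1 s t scale e \<phi> \<rho>"
    and r1: "\<rho> (x, ps) \<noteq> 0" and r2: "\<rho> (x', qs) \<noteq> 0"
  shows "Lam lam ps = Lam lam qs"
proof -
  let ?F = "{p. \<rho> p \<noteq> 0}"
  have ker: "\<rho> \<in> pa_kernel n Q1 s t scale e \<phi>" using mr unfolding minimal_relation_def by blast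
  then have pe: "pa_elem n Q1 s t \<rho>" and z: "pa_map scale e \<phi> \<rho> = 0" unfolding pa_kernel_def by auto
  have fF: "finite ?F" using pe unfolding pa_elem_def by blast
  define L where "L p = Lam lam (snd p)" for p :: "nat \<times> 'q list"
  define v where "v p = path_val e \<phi> (fst p) (snd p)" for p :: "nat \<times> 'q list"
  have ev: "d (v p) = scale (L p) (v p)" if "p \<in> ?F" for p
  proof -
    have "is_path n Q1 s t p" using pe that unfolding pa_elem_def by blast
    then obtain y where "fst p \<in> {1..n}" "path_from Q1 s t (fst p) (snd p) y" unfolding is_path_def by blast
    then show ?thesis unfolding v_def L_def using d_pv[OF d c lam] by blast
  qed
  note dD = Der0_D[OF d]
  have "\<forall>k. (\<Sum>\<mu>\<in>L ` ?F. scale (\<mu> ^ k) (\<Sum>p\<in>{p\<in>?F. L p = \<mu>}. scale (\<rho> p) (v p))) = 0"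
  proof
    fix k
    have "(d ^^ k) (pa_map scale e \<phi> \<rho>) = 0" using z der_iter(2)[OF dD(1,2), of k 0 0] by simp
    moreover have "(d ^^ k) (pa_map scale e \<phi> \<rho>) = (\<Sum>p\<in>?F. scale (\<rho> p) ((d ^^ k) (v p)))"
      unfolding pa_map_def v_def
      by (simp add: additive_sum[of "d ^^ k", OF der_iter(1)[OF dD(1,2)]] der_iter(2)[OF dD(1,2)])
    moreover have "(\<Sum>p\<in>?F. scale (\<rho> p) ((d ^^ k) (v p))) = (\<Sum>p\<in>?F. scale (L p ^ k) (scale (\<rho> p) (v p)))"
    proof (rule sum.cong[OF HOL.refl])
      fix p assume "p \<in> ?F"
      then have "(d ^^ k) (v p) = scale (L p ^ k) (v p)" using der_iter_eig[OF dD(2) ev] by blast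
      then show "scale (\<rho> p) ((d ^^ k) (v p)) = scale (L p ^ k) (scale (\<rho> p) (v p))" by (simp add: mult.commute)
    qed
    moreover have "(\<Sum>p\<in>?F. scale (L p ^ k) (scale (\<rho> p) (v p))) =
        (\<Sum>\<mu>\<in>L ` ?F. \<Sum>p\<in>{p\<in>?F. L p = \<mu>}. scale (L p ^ k) (scale (\<rho> p) (v p)))"
      by (rule sum.image_gen[OF fF])
    moreover have "(\<Sum>\<mu>\<in>L ` ?F. \<Sum>p\<in>{p\<in>?F. L p = \<mu>}. scale (L p ^ k) (scale (\<rho> p) (v p))) =
        (\<Sum>\<mu>\<in>L ` ?F. scale (\<mu> ^ k) (\<Sum>p\<in>{p\<in>?F. L p = \<mu>}. scale (\<rho> p) (v p)))"
      by (rule sum.cong[OF HOL.refl]) (simp add: scale_sum_right)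
    ultimately show "(\<Sum>\<mu>\<in>L ` ?F. scale (\<mu> ^ k) (\<Sum>p\<in>{p\<in>?F. L p = \<mu>}. scale (\<rho> p) (v p))) = 0" by simp
  qed
  then have W0: "\<forall>\<mu>\<in>L ` ?F. (\<Sum>p\<in>{p\<in>?F. L p = \<mu>}. scale (\<rho> p) (v p)) = 0"
    using vandermonde[of "L ` ?F" "\<lambda>\<mu>. \<Sum>p\<in>{p\<in>?F. L p = \<mu>}. scale (\<rho> p) (v p)"] fF by blast
  define \<mu>0 where "\<mu>0 = L (x, ps)"
  define S where "S = {p\<in>?F. L p = \<mu>0}"
  have xS: "(x, ps) \<in> S" unfolding S_def \<mu>0_def using r1 by simp
  have WS: "(\<Sum>p\<in>S. scale (\<rho> p) (v p)) = 0" using W0 xS unfolding S_def \<mu>0_def by force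
  let ?rS = "\<lambda>p. if p \<in> S then \<rho> p else 0"
  have suppS: "{p. ?rS p \<noteq> 0} = S" unfolding S_def by auto
  have "?rS \<in> pa_kernel n Q1 s t scale e \<phi>"
    unfolding pa_kernel_def
  proof (intro CollectI conjI)
    show "pa_elem n Q1 s t ?rS" using pe unfolding pa_elem_def suppS S_def
      by (auto intro: finite_subset[OF _ fF])
    have "pa_map scale e \<phi> ?rS = (\<Sum>p\<in>S. scale (?rS p) (v p))" unfolding pa_map_def suppS v_def ..
    also have "\<dots> = (\<Sum>p\<in>S. scale (\<rho> p) (v p))" by (rule sum.cong) auto
    finally show "pa_map scale e \<phi> ?rS = 0" using WS by simp
  qed
  moreover have "S \<subseteq> ?F" "S \<noteq> {}" unfolding S_def using xS by (auto simp: S_def)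
  ultimately have "S = ?F" using mr unfolding minimal_relation_def by blast
  then have "(x', qs) \<in> S" using r2 by simp
  then show ?thesis unfolding S_def \<mu>0_def L_def by simp
qed

end


context qalg begin

definition Wt :: "('q \<Rightarrow> 'k) \<Rightarrow> ('q \<times> bool) list \<Rightarrow> 'k" where
  "Wt lam w = sum_list (map (\<lambda>(a, b). if b then lam a else - lam a) w)"

lemma Wt_append: "Wt lam (u @ v) = Wt lam u + Wt lam v"
  unfolding Wt_def by simp

lemma Wt_path: "Wt lam (path_walk ps) = Lam lam ps"
  unfolding Wt_def path_walk_def Lam_def by (induction ps) auto

lemma Wt_inv: "Wt lam (walk_inv w) = - Wt lam w"
  unfolding Wt_def walk_inv_def by (induction w) (auto simp: sum_list_rev)

lemma walk_rel_W:
  assumes d: "d \<in> Der0 scale n e" and c: "corner_ok \<phi>"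
    and lam: "\<forall>\<alpha>\<in>Q1. d (\<phi> \<alpha>) = scale (lam \<alpha>) (\<phi> \<alpha>)"
    and wr: "walk_rel n Q1 s t scale e \<phi> a b"
  shows "Wt lam (snd a) = Wt lam (snd b)"
  using wr
proof (induction rule: walk_rel.induct)
  case (minrel \<rho> x ps x' qs)
  have "Lam lam ps = Lam lam qs" by (rule minrel_weight[OF d c lam minrel(1) minrel(2) minrel(3)])
  then show ?case by (simp add: Wt_path)
next
  case (concat x w1 w2 y x' u v y')
  have "Wt lam w1 = Wt lam w2" using concat.IH by simp
  then show ?case by (simp add: Wt_append)
qed (auto simp: Wt_def)

definition inner :: "'a \<Rightarrow> 'a \<Rightarrow> 'a" where "inner z a = z * a - a * z"

lemma class_eq:
  assumes "(\<lambda>a. d1 a - d2 a) \<in> Int0 scale n e"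
  shows "hh_class scale n e d1 = hh_class scale n e d2"
proof -
  obtain y where y: "y \<in> span (e ` {1..n})" "(\<lambda>a. d1 a - d2 a) = (\<lambda>a. y * a - a * y)"
    using assms unfolding Int0_def by blast
  have "(\<lambda>a. g a - d1 a) \<in> Int0 scale n e \<longleftrightarrow> (\<lambda>a. g a - d2 a) \<in> Int0 scale n e" for g
  proof
    assume "(\<lambda>a. g a - d1 a) \<in> Int0 scale n e"
    then obtain x where x: "x \<in> span (e ` {1..n})" "(\<lambda>a. g a - d1 a) = (\<lambda>a. x * a - a * x)"
      unfolding Int0_def by blast
    have "(\<lambda>a. g a - d2 a) = (\<lambda>a. (x + y) * a - a * (x + y))"
    proof
      fix a
      have h: "g a - d1 a = x * a - a * x" "d1 a - d2 a = y * a - a * y" using x(2) y(2) by metis+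
      have "g a - d2 a = (g a - d1 a) + (d1 a - d2 a)" by simp
      also have "\<dots> = (x * a - a * x) + (y * a - a * y)" using h by simp
      also have "\<dots> = (x + y) * a - a * (x + y)" by (simp add: distrib_left distrib_right)
      finally show "g a - d2 a = (x + y) * a - a * (x + y)" .
    qed
    moreover have "x + y \<in> span (e ` {1..n})" using x(1) y(1) span_add by blast
    ultimately show "(\<lambda>a. g a - d2 a) \<in> Int0 scale n e" unfolding Int0_def by blast
  next
    assume "(\<lambda>a. g a - d2 a) \<in> Int0 scale n e"
    then obtain x where x: "x \<in> span (e ` {1..n})" "(\<lambda>a. g a - d2 a) = (\<lambda>a. x * a - a * x)"
      unfolding Int0_def by blast
    have "(\<lambda>a. g a - d1 a) = (\<lambda>a. (x - y) * a - a * (x - y))"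
    proof
      fix a
      have h: "g a - d2 a = x * a - a * x" "d1 a - d2 a = y * a - a * y" using x(2) y(2) by metis+
      have "g a - d1 a = (g a - d2 a) - (d1 a - d2 a)" by simp
      also have "\<dots> = (x * a - a * x) - (y * a - a * y)" using h by simp
      also have "\<dots> = (x - y) * a - a * (x - y)" by (simp add: left_diff_distrib right_diff_distrib)
      finally show "g a - d1 a = (x - y) * a - a * (x - y)" .
    qed
    moreover have "x - y \<in> span (e ` {1..n})" using x(1) y(1) span_diff by blast
    ultimately show "(\<lambda>a. g a - d1 a) \<in> Int0 scale n e" unfolding Int0_def by blast
  qed
  then show ?thesis unfolding hh_class_def by blast
qed

lemma zE_left:
  assumes y: "y \<in> {1..n}" and v: "v = e y * v"
  shows "(\<Sum>i\<in>{1..n}. scale (c i) (e i)) * v = scale (c y) v"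
proof -
  have "(\<Sum>i\<in>{1..n}. scale (c i) (e i)) * v = (\<Sum>i\<in>{1..n}. scale (c i) (e i * v))"
    by (simp add: sum_distrib_right sc_l)
  also have "\<dots> = (\<Sum>i\<in>{1..n}. if i = y then scale (c y) v else 0)"
    by (rule sum.cong[OF HOL.refl]) (use left_e[OF y _ v] in auto)
  also have "\<dots> = scale (c y) v" using y by (simp add: sum.delta)
  finally show ?thesis .
qed

lemma zE_right:
  assumes x: "x \<in> {1..n}" and v: "v = v * e x"
  shows "v * (\<Sum>i\<in>{1..n}. scale (c i) (e i)) = scale (c x) v"
proof -
  have "v * (\<Sum>i\<in>{1..n}. scale (c i) (e i)) = (\<Sum>i\<in>{1..n}. scale (c i) (v * e i))"
    by (simp add: sum_distrib_left sc_r)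
  also have "\<dots> = (\<Sum>i\<in>{1..n}. if i = x then scale (c x) v else 0)"
    by (rule sum.cong[OF HOL.refl]) (use right_e[OF x _ v] in auto)
  also have "\<dots> = scale (c x) v" using x by (simp add: sum.delta)
  finally show ?thesis .
qed

lemma theta_mem:
  assumes p: "presentation n Q1 s t scale e \<phi>" and d: "d \<in> Der0 scale n e"
    and diag: "\<forall>\<alpha>\<in>Q1. \<exists>\<mu>. d (\<phi> \<alpha>) = scale \<mu> (\<phi> \<alpha>)"
  shows "hh_class scale n e d \<in> theta_image n Q1 s t scale e \<phi> x0 \<gamma>"
proof -
  have c: "corner_ok \<phi>" by (rule pres_corner[OF p])
  define lam where "lam \<alpha> = (SOME \<mu>. d (\<phi> \<alpha>) = scale \<mu> (\<phi> \<alpha>))" for \<alpha>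
  have lam: "\<forall>\<alpha>\<in>Q1. d (\<phi> \<alpha>) = scale (lam \<alpha>) (\<phi> \<alpha>)"
    unfolding lam_def using diag by (metis (mono_tags, lifting) someI_ex)
  define f where "f = Wt lam"
  have pi: "pi1_hom n Q1 s t scale e \<phi> x0 f"
    unfolding pi1_hom_def
  proof (intro conjI allI impI)
    fix w1 w2 assume "walk_from Q1 s t x0 w1 x0 \<and> walk_from Q1 s t x0 w2 x0 \<and>
        walk_rel n Q1 s t scale e \<phi> (x0, w1) (x0, w2)"
    then have "walk_rel n Q1 s t scale e \<phi> (x0, w1) (x0, w2)" by blast
    from walk_rel_W[OF d c lam this] show "f w1 = f w2" unfolding f_def by simp
  next
    fix w1 w2 show "f (w1 @ w2) = f w1 + f w2" unfolding f_def by (rule Wt_append)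
  qed
  define cc where "cc i = - f (\<gamma> i)" for i
  define z where "z = (\<Sum>i\<in>{1..n}. scale (cc i) (e i))"
  have zE: "z \<in> span (e ` {1..n})" unfolding z_def
  proof (rule span_sum)
    fix i assume i: "i \<in> {1..n}"
    then have "e i \<in> e ` {1..n}" by blast
    then show "scale (cc i) (e i) \<in> span (e ` {1..n})" by (intro span_scale span_base)
  qed
  define d' where "d' a = d a + (z * a - a * z)" for a
  note dD = Der0_D[OF d]
  have d'D: "d' \<in> Der0 scale n e"
    unfolding Der0_def
  proof (intro CollectI conjI allI ballI)
    fix a b show "d' (a + b) = d' a + d' b" unfolding d'_def using dD(1) by (simp add: algebra_simps)
  next
    fix c a show "d' (scale c a) = scale c (d' a)" unfolding d'_def using dD(2)
      by (simp add: scale_right_distrib scale_right_diff_distrib sc_l[symmetric] sc_r[symmetric])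
  next
    fix a b show "d' (a * b) = d' a * b + a * d' b" unfolding d'_def using dD(3) by (simp add: algebra_simps)
  next
    fix i assume i: "i \<in> {1..n}"
    have "z * e i = scale (cc i) (e i)" unfolding z_def by (rule zE_left[OF i]) (simp add: e_idem[OF i])
    moreover have "e i * z = scale (cc i) (e i)" unfolding z_def by (rule zE_right[OF i]) (simp add: e_idem[OF i])
    ultimately show "d' (e i) = 0" unfolding d'_def using dD(4)[OF i] by simp
  qed
  have "(\<lambda>a. d' a - d a) = (\<lambda>a. z * a - a * z)" unfolding d'_def by auto
  then have "(\<lambda>a. d' a - d a) \<in> Int0 scale n e" using zE unfolding Int0_def by blast
  then have cls: "hh_class scale n e d = hh_class scale n e d'" using class_eq by simp
  have cond: "\<forall>x y ps. x \<in> {1..n} \<and> path_from Q1 s t x ps y \<longrightarrow>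
           d' (path_val e \<phi> x ps) = scale (f (\<gamma> x @ path_walk ps @ walk_inv (\<gamma> y))) (path_val e \<phi> x ps)"
  proof (intro allI impI, elim conjE)
    fix x y ps assume x: "x \<in> {1..n}" and pth: "path_from Q1 s t x ps y"
    have y: "y \<in> {1..n}" using path_end pth x by blast
    let ?v = "path_val e \<phi> x ps"
    have vc: "?v = e y * ?v" "?v = ?v * e x" using pv_corner[OF c pth x] by auto
    have "z * ?v = scale (cc y) ?v" unfolding z_def by (rule zE_left[OF y vc(1)])
    moreover have "?v * z = scale (cc x) ?v" unfolding z_def by (rule zE_right[OF x vc(2)])
    moreover have "d ?v = scale (Lam lam ps) ?v" by (rule d_pv[OF d c lam x pth])
    ultimately have "d' ?v = scale (Lam lam ps + cc y - cc x) ?v"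
      unfolding d'_def by (simp add: scale_left_distrib scale_left_diff_distrib)
    moreover have "f (\<gamma> x @ path_walk ps @ walk_inv (\<gamma> y)) = Lam lam ps + cc y - cc x"
      unfolding f_def cc_def by (simp add: Wt_append Wt_path Wt_inv)
    ultimately show "d' ?v = scale (f (\<gamma> x @ path_walk ps @ walk_inv (\<gamma> y))) ?v" by simp
  qed
  have "\<exists>dd\<in>Der0 scale n e. hh_class scale n e d = hh_class scale n e dd \<and>
        (\<forall>x y ps. x \<in> {1..n} \<and> path_from Q1 s t x ps y \<longrightarrow>
           dd (path_val e \<phi> x ps) = scale (f (\<gamma> x @ path_walk ps @ walk_inv (\<gamma> y))) (path_val e \<phi> x ps))"
  proof (rule bexI[of _ d'])
    show "d' \<in> Der0 scale n e" by (rule d'D)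
    show "hh_class scale n e d = hh_class scale n e d' \<and>
        (\<forall>x y ps. x \<in> {1..n} \<and> path_from Q1 s t x ps y \<longrightarrow>
           d' (path_val e \<phi> x ps) = scale (f (\<gamma> x @ path_walk ps @ walk_inv (\<gamma> y))) (path_val e \<phi> x ps))"
      using cls cond by (rule conjI)
  qed
  then show ?thesis unfolding theta_image_def using pi by blast
qed

end


theorem proposition2p6:
  fixes scale :: "'k::field \<Rightarrow> 'a::ring_1 \<Rightarrow> 'a"
    and n :: nat and e :: "nat \<Rightarrow> 'a"
    and Q1 :: "'q set" and s t :: "'q \<Rightarrow> nat"
    and T :: "'q set" and x0 :: nat and \<gamma> :: "nat \<Rightarrow> ('q \<times> bool) list"
    and D :: "('a \<Rightarrow> 'a) set set"
  assumes "alg_closed TYPE('k)"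
    and "fd_algebra scale"
    and "complete_prim_orth_idems n e"
    and "basic_algebra n e"
    and "connected_algebra TYPE('a)"
    and "ordinary_quiver scale n e Q1 s t"
    and "no_oriented_cycles n Q1 s t"
    and "maximal_tree n Q1 s t T"
    and "x0 \<in> {1..n}"
    and "\<forall>x\<in>{1..n}. walk_from T s t x0 (\<gamma> x) x \<and> reduced_walk (\<gamma> x)"
    and "D \<subseteq> HH1 scale n e"
  shows "diagonalizable scale n e D \<longleftrightarrow>
    (\<exists>\<phi>. presentation n Q1 s t scale e \<phi> \<and> D \<subseteq> theta_image n Q1 s t scale e \<phi> x0 \<gamma>)"
proof -
  note fd = assms(2) and idem = assms(3) and oqv = assms(6) and DH = assms(11)
  have vs: "vector_space scale" using fd unfolding fd_algebra_def by blast
  have scc: "\<forall>c x y. scale c (x * y) = scale c x * y \<and> scale c (x * y) = x * scale c y"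
    using fd unfolding fd_algebra_def by blast
  have fin: "\<exists>S. finite S \<and> module.span scale S = UNIV" using fd unfolding fd_algebra_def by blast
  have finQ: "finite Q1" and ends: "\<forall>\<alpha>\<in>Q1. s \<alpha> \<in> {1..n} \<and> t \<alpha> \<in> {1..n}"
    and oq: "\<forall>i\<in>{1..n}. \<forall>j\<in>{1..n}. card {\<alpha>\<in>Q1. s \<alpha> = i \<and> t \<alpha> = j} =
        vector_space.dim scale (corner e j i rad) - vector_space.dim scale (corner e j i (rad_sq scale))"
    using oqv unfolding ordinary_quiver_def by blast+
  have QA: "qalg scale n e Q1 s t"
    unfolding qalg_def qalg_axioms_def falg_fd_def falg_fd_axioms_def falg_def
    using vs scc fin idem ends finQ by blast
  interpret Q: qalg scale n e Q1 s t by (rule QA)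
  show ?thesis
  proof
    assume "diagonalizable scale n e D"
    then obtain B where ab: "algebra_basis scale n e B"
      and diag: "\<forall>c\<in>D. \<exists>d\<in>c. \<forall>b\<in>B. \<exists>c. d b = scale c b"
      unfolding diagonalizable_def by blast
    have QBa: "qbasis scale n e Q1 s t B"
      unfolding qbasis_def qbasis_axioms_def using QA ab oq by blast
    interpret QB: qbasis scale n e Q1 s t B by (rule QBa)
    obtain \<phi> where P1: "\<forall>\<alpha>\<in>Q1. \<phi> \<alpha> \<in> B - e ` {1..n} \<and> \<phi> \<alpha> = e (t \<alpha>) * \<phi> \<alpha> * e (s \<alpha>)"
      and P2: "rad \<subseteq> {a + k | a k. a \<in> module.span scale (\<phi> ` Q1) \<and> k \<in> rad_sq scale}"
      and P3: "\<forall>i\<in>{1..n}. \<forall>j\<in>{1..n}. \<forall>u. (\<Sum>\<alpha>\<in>QB.Qij i j. scale (u \<alpha>) (\<phi> \<alpha>)) \<in> corner e j i (rad_sq scale)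
         \<longrightarrow> (\<forall>\<alpha>\<in>QB.Qij i j. u \<alpha> = 0)"
      using QB.exists_phi by blast
    have P1': "\<forall>\<alpha>\<in>Q1. \<phi> \<alpha> \<in> rad \<and> \<phi> \<alpha> = e (t \<alpha>) * \<phi> \<alpha> * e (s \<alpha>)"
      using P1 QB.BE_R by blast
    have P3': "\<forall>i\<in>{1..n}. \<forall>j\<in>{1..n}. \<forall>u. (\<Sum>\<alpha>\<in>{\<alpha>\<in>Q1. s \<alpha> = i \<and> t \<alpha> = j}. scale (u \<alpha>) (\<phi> \<alpha>)) \<in> corner e j i (rad_sq scale)
         \<longrightarrow> (\<forall>\<alpha>\<in>{\<alpha>\<in>Q1. s \<alpha> = i \<and> t \<alpha> = j}. u \<alpha> = 0)"
      using P3 unfolding QB.Qij_def .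
    have UB: "UNIV \<subseteq> module.span scale (e ` {1..n} \<union> rad)"
    proof -
      have "B \<subseteq> e ` {1..n} \<union> rad" using QB.BE_R by blast
      then have "module.span scale B \<subseteq> module.span scale (e ` {1..n} \<union> rad)" by (rule Q.span_mono)
      then show ?thesis using QB.B_span by simp
    qed
    have pres: "presentation n Q1 s t scale e \<phi>" by (rule Q.phi_presentation[OF P1' P2 P3' UB])
    have "D \<subseteq> theta_image n Q1 s t scale e \<phi> x0 \<gamma>"
    proof
      fix c assume cD: "c \<in> D"
      then obtain d where dc: "d \<in> c" and dd: "\<forall>b\<in>B. \<exists>c. d b = scale c b" using diag by blast
      obtain d0 where d0: "d0 \<in> Der0 scale n e" "c = hh_class scale n e d0"
        using cD DH unfolding HH1_def by blast
      have dD: "d \<in> Der0 scale n e" "(\<lambda>a. d a - d0 a) \<in> Int0 scale n e"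
        using dc d0(2) unfolding hh_class_def by blast+
      have "hh_class scale n e d = c" using Q.class_eq[OF dD(2)] d0(2) by simp
      moreover have "\<forall>\<alpha>\<in>Q1. \<exists>\<mu>. d (\<phi> \<alpha>) = scale \<mu> (\<phi> \<alpha>)" using P1 dd by blast
      ultimately show "c \<in> theta_image n Q1 s t scale e \<phi> x0 \<gamma>"
        using Q.theta_mem[OF pres dD(1)] by metis
    qed
    then show "\<exists>\<phi>. presentation n Q1 s t scale e \<phi> \<and> D \<subseteq> theta_image n Q1 s t scale e \<phi> x0 \<gamma>"
      using pres by blast
  next
    assume "\<exists>\<phi>. presentation n Q1 s t scale e \<phi> \<and> D \<subseteq> theta_image n Q1 s t scale e \<phi> x0 \<gamma>"
    then obtain \<phi> where "presentation n Q1 s t scale e \<phi>" "D \<subseteq> theta_image n Q1 s t scale e \<phi> x0 \<gamma>" by blast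
    then show "diagonalizable scale n e D" by (rule Q.rhs_to_lhs)
  qed
qed


end
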